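(* Let $b,\beta,\beta'\in\mathbb{R}$, $\gamma>0$, $\gamma'\ge0$ and $c\ge-\gamma$. Then \[ \mu_{b,c,\beta,\gamma}\rhd\mu_{b+\beta,\,c+\gamma,\,\beta',\,\gamma'}=\mu_{b,c,\beta+\beta',\gamma+\gamma'}. \] In particular, for normalized free Meixner distributions $\mu_{b,c}=\mu_{b,c,0,1}$ with $c\ge-1$, $\mu_{b,c}\rhd\mu_{b,c+1}=\mu_{b,c}^{\boxplus2}$.
   Context: For real $b,c,\beta,\gamma$ with $\gamma\ge0$ and $c+\gamma\ge0$, the free Meixner distribution $\mu_{b,c,\beta,\gamma}$ is the compactly supported probability measure on $\mathbb{R}$ with Jacobi parameters $(\beta_0,\beta_1,\beta_2,\dots)=(\beta,b+\beta,b+\beta,\dots)$ and $(\gamma_0,\gamma_1,\dots)=(\gamma,c+\gamma,c+\gamma,\dots)$, i.e. whose Cauchy transform $G(z)=\int\frac{d\mu(x)}{z-x}$ has the continued fraction expansion $1/(z-\beta_0-\gamma_0/(z-\beta_1-\gamma_1/(z-\beta_2-\cdots)))$. For probability measures $\mu,\nu$ with $F_\mu=1/G_\mu$, the monotone convolution $\mu\rhd\nu$ is the probability measure with $F_{\mu\rhd\nu}=F_\mu\circ F_\nu$. $\boxplus$ is free convolution. *)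

theory Defs
  imports "HOL-Probability.Probability"
begin

definition real_prob :: "real measure \<Rightarrow> bool" where
  "real_prob \<mu> \<longleftrightarrow> prob_space \<mu> \<and> sets \<mu> = sets borel"

definition compact_support :: "real measure \<Rightarrow> bool" where
  "compact_support \<mu> \<longleftrightarrow> (\<exists>K. compact K \<and> emeasure \<mu> K = 1)"

definition cauchy_tr :: "real measure \<Rightarrow> complex \<Rightarrow> complex" where
  "cauchy_tr \<mu> z = integral\<^sup>L \<mu> (\<lambda>x. 1 / (z - complex_of_real x))"

definition recip_cauchy_tr :: "real measure \<Rightarrow> complex \<Rightarrow> complex" where
  "recip_cauchy_tr \<mu> z = 1 / cauchy_tr \<mu> z"

fun jacobi_cf :: "(nat \<Rightarrow> real) \<Rightarrow> (nat \<Rightarrow> real) \<Rightarrow> nat \<Rightarrow> nat \<Rightarrow> complex \<Rightarrow> complex" where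
  "jacobi_cf bs gs 0 k z = 0"
| "jacobi_cf bs gs (Suc n) k z =
     1 / (z - complex_of_real (bs k) - complex_of_real (gs k) * jacobi_cf bs gs n (Suc k) z)"

definition has_jacobi_params :: "real measure \<Rightarrow> (nat \<Rightarrow> real) \<Rightarrow> (nat \<Rightarrow> real) \<Rightarrow> bool" where
  "has_jacobi_params \<mu> bs gs \<longleftrightarrow>
     (\<forall>z. Im z > 0 \<longrightarrow> (\<lambda>n. jacobi_cf bs gs n 0 z) \<longlonglongrightarrow> cauchy_tr \<mu> z)"

definition is_free_meixner :: "real measure \<Rightarrow> real \<Rightarrow> real \<Rightarrow> real \<Rightarrow> real \<Rightarrow> bool" where
  "is_free_meixner \<mu> b c \<beta> \<gamma> \<longleftrightarrow>
     real_prob \<mu> \<and> compact_support \<mu> \<and>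
     has_jacobi_params \<mu> (\<lambda>n. if n = 0 then \<beta> else b + \<beta>) (\<lambda>n. if n = 0 then \<gamma> else c + \<gamma>)"

definition is_monotone_conv :: "real measure \<Rightarrow> real measure \<Rightarrow> real measure \<Rightarrow> bool" where
  "is_monotone_conv \<mu> \<nu> \<rho> \<longleftrightarrow> real_prob \<rho> \<and>
     (\<forall>z. Im z > 0 \<longrightarrow> recip_cauchy_tr \<rho> z = recip_cauchy_tr \<mu> (recip_cauchy_tr \<nu> z))"

definition cauchy_inv :: "real measure \<Rightarrow> real \<Rightarrow> complex \<Rightarrow> complex" where
  "cauchy_inv \<mu> R w = (THE z. cmod z > R \<and> cauchy_tr \<mu> z = w)"

text \<open>rho is the free convolution mu boxplus nu (for compactly supported measures):
  the R-transforms R(w) = G^{-1}(w) - 1/w add on a punctured neighbourhood of 0,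
  where G^{-1} is the inverse of G near infinity.\<close>
definition is_free_conv :: "real measure \<Rightarrow> real measure \<Rightarrow> real measure \<Rightarrow> bool" where
  "is_free_conv \<mu> \<nu> \<rho> \<longleftrightarrow> real_prob \<mu> \<and> real_prob \<nu> \<and> real_prob \<rho> \<and>
     (\<exists>R r. r > 0 \<and> (\<forall>w. 0 < cmod w \<and> cmod w < r \<longrightarrow>
        (\<forall>m\<in>{\<mu>, \<nu>, \<rho>}. \<exists>!z. cmod z > R \<and> cauchy_tr m z = w) \<and>
        cauchy_inv \<rho> R w - 1 / w = (cauchy_inv \<mu> R w - 1 / w) + (cauchy_inv \<nu> R w - 1 / w)))"

end

theory Submission
  imports Defs
begin


lemma G_meas:
  assumes "sets M = sets borel"
  shows "(\<lambda>t. 1 / (z - complex_of_real t)) \<in> borel_measurable M"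
  by (subst measurable_cong_sets[OF assms refl]) measurable

lemma norm_int_le:
  fixes f :: "real \<Rightarrow> complex"
  assumes "prob_space M" "integrable M f" "AE t in M. norm (f t) \<le> B"
  shows "norm (integral\<^sup>L M f) \<le> B"
proof -
  interpret prob_space M by fact
  have "norm (integral\<^sup>L M f) \<le> (\<integral>x. norm (f x) \<partial>M)" by (rule integral_norm_bound)
  also have "\<dots> \<le> B" using assms by (intro integral_le_const) auto
  finally show ?thesis .
qed

lemma G_integrable:
  assumes "prob_space M" "sets M = sets borel" "AE t in M. \<bar>t\<bar> \<le> K"
    and "d > 0" and "\<And>t. \<bar>t\<bar> \<le> K \<Longrightarrow> d \<le> cmod (z - complex_of_real t)"
  shows "integrable M (\<lambda>t. 1 / (z - complex_of_real t))"
proof -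
  interpret prob_space M by fact
  show ?thesis
  proof (rule integrable_const_bound[where B="1/d"])
  show "(\<lambda>t. 1 / (z - complex_of_real t)) \<in> borel_measurable M" by (rule G_meas[OF assms(2)])
  show "AE x in M. norm (1 / (z - complex_of_real x)) \<le> 1/d"
    using assms(3) proof eventually_elim
    case (elim t)
    have "d \<le> cmod (z - complex_of_real t)" using assms(5) elim by auto
    then show ?case using assms(4) by (simp add: norm_divide divide_simps)
  qed
qed
qed

locale pm = fixes M :: "real measure"
  assumes ps: "prob_space M" and sb: "sets M = sets borel"
begin

lemma space_M: "space M = UNIV"
  using sets_eq_imp_space_eq[OF sb] by simp

lemma integ_up:
  assumes "Im z > 0"
  shows "integrable M (\<lambda>t. 1 / (z - complex_of_real t))"
proof -
  interpret prob_space M by (rule ps)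
  show ?thesis
  proof (rule integrable_const_bound[where B="1 / Im z"])
    show "(\<lambda>t. 1 / (z - complex_of_real t)) \<in> borel_measurable M" by (rule G_meas[OF sb])
    show "AE t in M. norm (1 / (z - complex_of_real t)) \<le> 1 / Im z"
    proof (rule AE_I2)
      fix t
      have "Im z \<le> cmod (z - complex_of_real t)"
        using abs_Im_le_cmod[of "z - complex_of_real t"] by simp
      then show "norm (1 / (z - complex_of_real t)) \<le> 1 / Im z" using assms
        by (simp add: norm_divide divide_simps)
    qed
  qed
qed

lemma G_cnj: "cauchy_tr M (cnj z) = cnj (cauchy_tr M z)"
proof -
  have "(\<lambda>t. 1 / (cnj z - complex_of_real t)) = (\<lambda>t. cnj (1 / (z - complex_of_real t)))" by auto
  then show ?thesis unfolding cauchy_tr_def by (simp only: Bochner_Integration.integral_cnj)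
qed

lemma Im_G_eq:
  assumes "Im z > 0"
  shows "- Im (cauchy_tr M z) = integral\<^sup>L M (\<lambda>t. Im z / (cmod (z - complex_of_real t))\<^sup>2)"
proof -
  have I: "integrable M (\<lambda>t. 1 / (z - complex_of_real t))"
    by (rule integ_up[OF assms])
  have "Im (cauchy_tr M z) = integral\<^sup>L M (\<lambda>t. Im (1 / (z - complex_of_real t)))"
    unfolding cauchy_tr_def using I by simp
  also have "\<dots> = integral\<^sup>L M (\<lambda>t. - (Im z / (cmod (z - complex_of_real t))\<^sup>2))"
    by (intro Bochner_Integration.integral_cong refl) (simp add: Im_divide cmod_power2)
  finally show ?thesis by simp
qed



lemma Im_integ:
  assumes "Im z > 0"
  shows "integrable M (\<lambda>t. Im z / (cmod (z - complex_of_real t))\<^sup>2)"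
proof -
  interpret prob_space M by (rule ps)
  show ?thesis
  proof (rule integrable_const_bound[where B="1 / Im z"])
    show "(\<lambda>t. Im z / (cmod (z - complex_of_real t))\<^sup>2) \<in> borel_measurable M"
      by (subst measurable_cong_sets[OF sb refl]) measurable
    show "AE t in M. norm (Im z / (cmod (z - complex_of_real t))\<^sup>2) \<le> 1 / Im z"
    proof (rule AE_I2)
      fix t
      have a: "Im z \<le> cmod (z - complex_of_real t)"
        using abs_Im_le_cmod[of "z - complex_of_real t"] by simp
      have "Im z / (cmod (z - complex_of_real t))\<^sup>2 \<le> Im z / (Im z)\<^sup>2"
        using assms a by (intro divide_left_mono power_mono mult_pos_pos) auto
      also have "\<dots> = 1 / Im z" by (simp add: power2_eq_square)
      finally show "norm (Im z / (cmod (z - complex_of_real t))\<^sup>2) \<le> 1 / Im z"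
        using assms by simp
    qed
  qed
qed



lemma ball_bound:
  assumes "e > 0"
  shows "measure M (ball x e) \<le> 2 * e * (- Im (cauchy_tr M (Complex x e)))"
proof -
  interpret prob_space M by (rule ps)
  let ?z = "Complex x e"
  have ze: "Im ?z > 0" using assms by simp
  have mb: "ball x e \<in> sets M" using sb by simp
  have "measure M (ball x e) / (2 * e) = integral\<^sup>L M (\<lambda>t. indicator (ball x e) t / (2 * e))"
    using space_M by simp
  also have "\<dots> \<le> integral\<^sup>L M (\<lambda>t. Im ?z / (cmod (?z - complex_of_real t))\<^sup>2)"
  proof (rule integral_mono[OF _ Im_integ[OF ze]])
    have "emeasure M (ball x e) < \<infinity>" using emeasure_finite[of "ball x e"] by (simp add: less_top[symmetric])
      then show "integrable M (\<lambda>t. indicator (ball x e) t / (2 * e) :: real)"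
      using mb by (intro integrable_divide integrable_real_indicator)
    fix t
    show "indicator (ball x e) t / (2 * e) \<le> Im ?z / (cmod (?z - complex_of_real t))\<^sup>2"
    proof (cases "t \<in> ball x e")
      case True
      then have "\<bar>x - t\<bar> < e" by (simp add: dist_real_def)
      then have "\<bar>x - t\<bar>\<^sup>2 < e\<^sup>2" by (intro power_strict_mono) auto
      then have lt: "(x - t)\<^sup>2 < e\<^sup>2" by simp
      have cm: "(cmod (?z - complex_of_real t))\<^sup>2 = (x - t)\<^sup>2 + e\<^sup>2"
        by (simp add: cmod_power2)
      have p: "0 < (x - t)\<^sup>2 + e\<^sup>2" using assms by (simp add: add_nonneg_pos)
      have "indicator (ball x e) t / (2 * e) = e / (2 * e\<^sup>2)" using True assms
        by (simp add: power2_eq_square)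
      also have "\<dots> \<le> e / ((x - t)\<^sup>2 + e\<^sup>2)"
        using lt p assms by (intro divide_left_mono) auto
      finally show ?thesis using cm by simp
    next
      case False then show ?thesis using assms by simp
    qed
  qed
  also have "\<dots> = - Im (cauchy_tr M ?z)" using Im_G_eq[OF ze] by simp
  finally show ?thesis using assms by (simp add: divide_simps mult.commute)
qed



lemma cover:
  assumes C: "C \<ge> 0" and h: "\<And>x e. x \<in> {p..p+1} \<Longrightarrow> 0 < e \<Longrightarrow> e \<le> 1 \<Longrightarrow> measure M (ball x e) \<le> C * e\<^sup>2"
  shows "measure M {p..p+1} = 0"
proof (rule ccontr)
  interpret prob_space M by (rule ps)
  assume ne: "measure M {p..p+1} \<noteq> 0"
  define m where "m = measure M {p..p+1}"
  have mpos: "m > 0" using ne measure_nonneg[of M "{p..p+1}"] unfolding m_def by linarith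
  obtain n :: nat where n: "real n > 2 * C / m" using reals_Archimedean2 by blast
  define N where "N = Suc n"
  have Npos: "real N > 0" unfolding N_def by simp
  have N: "real N > 2 * C / m" using n unfolding N_def by simp
  have sub: "{p..p+1} \<subseteq> (\<Union>j\<in>{..N}. ball (p + real j / real N) (1 / real N))"
  proof
    fix t assume t: "t \<in> {p..p+1}"
    define s where "s = (t - p) * real N"
    have s0: "0 \<le> s" "s \<le> real N" using t Npos unfolding s_def by (auto intro: mult_le_cancel_right1[THEN iffD2])
    define j where "j = nat \<lfloor>s\<rfloor>"
    have fl: "real j \<le> s" "s < real j + 1" using s0 unfolding j_def by linarith+
    have jN: "j \<le> N" using fl s0 by linarith
    have "t - (p + real j / real N) = (s - real j) / real N"
      using Npos unfolding s_def by (simp add: field_simps)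
    then have "dist (p + real j / real N) t < 1 / real N"
      using fl Npos by (simp add: dist_real_def divide_simps)
    then show "t \<in> (\<Union>j\<in>{..N}. ball (p + real j / real N) (1 / real N))"
      using jN by auto
  qed
  have "m \<le> measure M (\<Union>j\<in>{..N}. ball (p + real j / real N) (1 / real N))"
    unfolding m_def using sub by (intro finite_measure_mono) (auto simp: sb)
  also have "\<dots> \<le> (\<Sum>j\<in>{..N}. measure M (ball (p + real j / real N) (1 / real N)))"
    by (rule finite_measure_subadditive_finite) (auto simp: sb)
  also have "\<dots> \<le> (\<Sum>j\<in>{..N}. C * (1 / real N)\<^sup>2)"
  proof (rule sum_mono)
    fix j assume "j \<in> {..N}"
    then have "real j \<le> real N" by simp
    then have "real j / real N \<le> 1" using Npos by (simp add: divide_simps)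
    then have "p + real j / real N \<in> {p..p+1}" using Npos by auto
    then show "measure M (ball (p + real j / real N) (1 / real N)) \<le> C * (1 / real N)\<^sup>2"
      using Npos by (intro h) auto
  qed
  also have "\<dots> = (real N + 1) * C / (real N)\<^sup>2" by (simp add: power2_eq_square)
  also have "\<dots> \<le> 2 * real N * C / (real N)\<^sup>2"
  proof -
    have N1: "real N \<ge> 1" unfolding N_def by simp
    have "(real N + 1) * C \<le> 2 * real N * C" using C N1 by (intro mult_right_mono) auto
    then show ?thesis by (intro divide_right_mono) auto
  qed
  also have "\<dots> = 2 * C / real N" using Npos by (simp add: power2_eq_square)
  also have "\<dots> < m" using N Npos mpos by (simp add: divide_simps mult.commute)
  finally show False by simp
qed

end

locale cm = pm M for M :: "real measure" + fixes K :: real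
  assumes ae: "AE t in M. \<bar>t\<bar> \<le> K"
begin

lemma integ: "d > 0 \<Longrightarrow> (\<And>t. \<bar>t\<bar> \<le> K \<Longrightarrow> d \<le> cmod (z - complex_of_real t)) \<Longrightarrow>
   integrable M (\<lambda>t. 1 / (z - complex_of_real t))"
  using G_integrable[OF ps sb ae] by blast

lemma G_bound:
  assumes "d > 0" "\<And>t. \<bar>t\<bar> \<le> K \<Longrightarrow> d \<le> cmod (z - complex_of_real t)"
  shows "cmod (cauchy_tr M z) \<le> 1/d"
  unfolding cauchy_tr_def
proof (rule norm_int_le[OF ps integ[OF assms]])
  show "AE t in M. cmod (1 / (z - complex_of_real t)) \<le> 1 / d"
    using ae proof eventually_elim
    case (elim t)
    have "d \<le> cmod (z - complex_of_real t)" using assms elim by auto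
    then show ?case using assms(1) by (simp add: norm_divide divide_simps)
  qed
qed

lemma zG1:
  assumes "d > 0" "\<And>t. \<bar>t\<bar> \<le> K \<Longrightarrow> d \<le> cmod (z - complex_of_real t)"
  shows "cmod (z * cauchy_tr M z - 1) \<le> K/d"
proof -
  interpret prob_space M by (rule ps)
  have I: "integrable M (\<lambda>t. 1 / (z - complex_of_real t))" by (rule integ[OF assms])
  have eq: "z * cauchy_tr M z - 1 = integral\<^sup>L M (\<lambda>t. z * (1 / (z - complex_of_real t)) - 1)"
  proof -
    have "integral\<^sup>L M (\<lambda>t. z * (1 / (z - complex_of_real t)) - 1)
       = integral\<^sup>L M (\<lambda>t. z * (1 / (z - complex_of_real t))) - integral\<^sup>L M (\<lambda>t. 1)"
      by (rule Bochner_Integration.integral_diff) (use integrable_mult_right[OF I, of z] in auto)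
    also have "\<dots> = z * cauchy_tr M z - 1"
      unfolding cauchy_tr_def by (subst integral_mult_right_zero) (simp add: prob_space)
    finally show ?thesis by simp
  qed
  show ?thesis unfolding eq
  proof (rule norm_int_le[OF ps])
    show "integrable M (\<lambda>t. z * (1 / (z - complex_of_real t)) - 1)" using integrable_mult_right[OF I, of z] by (intro Bochner_Integration.integrable_diff) auto
    show "AE t in M. cmod (z * (1 / (z - complex_of_real t)) - 1) \<le> K / d"
      using ae proof eventually_elim
      case (elim t)
      have d: "d \<le> cmod (z - complex_of_real t)" using assms elim by auto
      then have nz: "z - complex_of_real t \<noteq> 0" using assms(1) by auto
      have "z * (1 / (z - complex_of_real t)) - 1 = complex_of_real t / (z - complex_of_real t)"
        using nz by (simp add: field_simps)
      then have "cmod (z * (1 / (z - complex_of_real t)) - 1) = \<bar>t\<bar> / cmod (z - complex_of_real t)"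
        by (simp add: norm_divide)
      also have "\<dots> \<le> K / d"
        using d elim assms(1) by (intro frac_le) auto
      finally show ?case .
    qed
  qed
qed

lemma ImG_upper:
  assumes "Im z > 0" "d > 0" "\<And>t. \<bar>t\<bar> \<le> K \<Longrightarrow> d \<le> cmod (z - complex_of_real t)"
  shows "- Im (cauchy_tr M z) \<le> Im z / d\<^sup>2"
proof -
  interpret prob_space M by (rule ps)
  show ?thesis unfolding Im_G_eq[OF assms(1)]
  proof (rule integral_le_const[OF Im_integ[OF assms(1)]])
    show "AE t in M. Im z / (cmod (z - complex_of_real t))\<^sup>2 \<le> Im z / d\<^sup>2"
      using ae proof eventually_elim
      case (elim t)
      have "d \<le> cmod (z - complex_of_real t)" using assms elim by auto
      then show ?case using assms by (intro divide_left_mono power_mono mult_pos_pos) auto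
    qed
  qed
qed

lemma ImG_lower:
  assumes "Im z > 0" "K \<ge> 0"
  shows "Im z / (cmod z + K)\<^sup>2 \<le> - Im (cauchy_tr M z)"
proof -
  interpret prob_space M by (rule ps)
  have pz: "cmod z > 0" using assms abs_Im_le_cmod[of z] by auto
  show ?thesis unfolding Im_G_eq[OF assms(1)]
  proof (rule integral_ge_const[OF Im_integ[OF assms(1)]])
    show "AE t in M. Im z / (cmod z + K)\<^sup>2 \<le> Im z / (cmod (z - complex_of_real t))\<^sup>2"
      using ae proof eventually_elim
      case (elim t)
      have "cmod (z - complex_of_real t) \<le> cmod z + K"
        using norm_triangle_ineq4[of z "complex_of_real t"] elim by simp
      moreover have "cmod (z - complex_of_real t) > 0"
        using assms abs_Im_le_cmod[of "z - complex_of_real t"] by auto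
      ultimately show ?case using assms by (intro divide_left_mono power_mono mult_pos_pos) auto
    qed
  qed
qed

lemma ImG_neg: assumes "Im z > 0" "K \<ge> 0" shows "Im (cauchy_tr M z) < 0"
proof -
  have pz: "cmod z > 0" using assms abs_Im_le_cmod[of z] by auto
  have "0 < Im z / (cmod z + K)\<^sup>2" using assms pz by (intro divide_pos_pos) (use add_pos_nonneg[OF pz assms(2)] in auto)
  then show ?thesis using ImG_lower[OF assms] by linarith
qed

lemma G_lip:
  assumes "d > 0" "\<And>t. \<bar>t\<bar> \<le> K \<Longrightarrow> d \<le> cmod (z - complex_of_real t)"
    and "d' > 0" "\<And>t. \<bar>t\<bar> \<le> K \<Longrightarrow> d' \<le> cmod (z' - complex_of_real t)"
  shows "cmod (cauchy_tr M z - cauchy_tr M z') \<le> cmod (z - z') / (d * d')"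
proof -
  have I: "integrable M (\<lambda>t. 1 / (z - complex_of_real t))" by (rule integ[OF assms(1,2)])
  have I': "integrable M (\<lambda>t. 1 / (z' - complex_of_real t))" by (rule integ[OF assms(3,4)])
  have eq: "cauchy_tr M z - cauchy_tr M z' =
     integral\<^sup>L M (\<lambda>t. 1 / (z - complex_of_real t) - 1 / (z' - complex_of_real t))"
    unfolding cauchy_tr_def by (rule Bochner_Integration.integral_diff[symmetric, OF I I'])
  show ?thesis unfolding eq
  proof (rule norm_int_le[OF ps])
    show "integrable M (\<lambda>t. 1 / (z - complex_of_real t) - 1 / (z' - complex_of_real t))"
      using I I' by (rule Bochner_Integration.integrable_diff)
    show "AE t in M. cmod (1 / (z - complex_of_real t) - 1 / (z' - complex_of_real t)) \<le> cmod (z - z') / (d * d')"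
      using ae proof eventually_elim
      case (elim t)
      have a: "d \<le> cmod (z - complex_of_real t)" "d' \<le> cmod (z' - complex_of_real t)"
        using assms elim by auto
      then have nz: "z - complex_of_real t \<noteq> 0" "z' - complex_of_real t \<noteq> 0" using assms by auto
      have "1 / (z - complex_of_real t) - 1 / (z' - complex_of_real t) =
         (z' - z) / ((z - complex_of_real t) * (z' - complex_of_real t))"
        using nz by (simp add: field_simps)
      then have "cmod (1 / (z - complex_of_real t) - 1 / (z' - complex_of_real t)) =
         cmod (z - z') / (cmod (z - complex_of_real t) * cmod (z' - complex_of_real t))"
        by (simp add: norm_divide norm_mult norm_minus_commute)
      also have "\<dots> \<le> cmod (z - z') / (d * d')"
        using a assms by (intro divide_left_mono mult_mono mult_pos_pos) auto
      finally show ?case .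
    qed
  qed
qed

end



abbreviation tlc :: "real \<Rightarrow> real \<Rightarrow> nat \<Rightarrow> complex \<Rightarrow> complex" where
  "tlc a g n z \<equiv> jacobi_cf (\<lambda>_. a) (\<lambda>_. g) n 0 z"

lemma jcf_const_shift0: "jacobi_cf (\<lambda>_. a) (\<lambda>_. g) n k z = jacobi_cf (\<lambda>_. a) (\<lambda>_. g) n k' z"
proof (induction n arbitrary: k k')
  case 0 then show ?case by simp
next
  case (Suc n) then show ?case by (simp only: jacobi_cf.simps) (metis Suc.IH)
qed

lemma jcf_const_shift: "jacobi_cf (\<lambda>_. a) (\<lambda>_. g) n k z = jacobi_cf (\<lambda>_. a) (\<lambda>_. g) n 0 z"
  by (rule jcf_const_shift0)

lemma jcf_tail: "0 < k \<Longrightarrow> jacobi_cf (\<lambda>n. if n = 0 then B else A) (\<lambda>n. if n = 0 then G else C) n k z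
    = jacobi_cf (\<lambda>_. A) (\<lambda>_. C) n k z"
  by (induction n arbitrary: k) simp_all

lemma meix_cf: "jacobi_cf (\<lambda>n. if n = 0 then B else A) (\<lambda>n. if n = 0 then G else C) (Suc n) 0 z
   = 1 / (z - complex_of_real B - complex_of_real G * tlc A C n z)"
  by (simp add: jcf_tail jcf_const_shift0[of A C n "Suc 0" z 0])

lemma tl_Suc: "tlc a g (Suc n) z = 1 / (z - complex_of_real a - complex_of_real g * tlc a g n z)"
  by (simp add: jcf_const_shift0[of a g n "Suc 0" z 0])

lemma den_Im:
  assumes "g \<ge> 0" "Im T \<le> 0"
  shows "Im (z - complex_of_real a - complex_of_real g * T) \<ge> Im z"
  using assms by (simp add: mult_nonneg_nonpos)

lemma inv_bounds:
  assumes "Im D \<ge> y" "y > 0"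
  shows "Im (1 / D) \<le> 0" "cmod (1 / D) \<le> 1 / y" "D \<noteq> 0"
proof -
  have "y \<le> cmod D" using assms abs_Im_le_cmod[of D] by auto
  then show "cmod (1 / D) \<le> 1 / y" using assms by (simp add: norm_divide divide_simps)
  show "D \<noteq> 0" using assms by auto
  show "Im (1 / D) \<le> 0" using assms by (simp add: Im_divide divide_nonpos_pos)
qed

lemma tl_props:
  assumes "g \<ge> 0" "Im z > 0"
  shows "Im (tlc a g n z) \<le> 0 \<and> cmod (tlc a g n z) \<le> 1 / Im z"
proof (induction n)
  case 0 then show ?case using assms by simp
next
  case (Suc n)
  let ?D = "z - complex_of_real a - complex_of_real g * tlc a g n z"
  have "Im ?D \<ge> Im z" using den_Im[OF assms(1)] Suc by blast
  then show ?case unfolding tl_Suc using inv_bounds[of "Im z" ?D] assms by auto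
qed

lemma tl_den_nz:
  assumes "g \<ge> 0" "Im z > 0"
  shows "z - complex_of_real a - complex_of_real g * tlc a g n z \<noteq> 0"
  using inv_bounds(3)[OF den_Im[OF assms(1)] assms(2)] tl_props[OF assms] by blast

lemma tl_lower:
  assumes "g \<ge> 0" "Im z > 0"
  shows "1 / (cmod (z - complex_of_real a) + g / Im z) \<le> cmod (tlc a g (Suc n) z)"
proof -
  let ?D = "z - complex_of_real a - complex_of_real g * tlc a g n z"
  have "cmod ?D \<le> cmod (z - complex_of_real a) + cmod (complex_of_real g * tlc a g n z)"
    by (rule norm_triangle_ineq4)
  also have "cmod (complex_of_real g * tlc a g n z) \<le> g / Im z"
  proof -
    have "cmod (tlc a g n z) \<le> 1 / Im z" using tl_props[OF assms, of a n] by simp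
    then have "g * cmod (tlc a g n z) \<le> g * (1 / Im z)" using assms by (intro mult_left_mono) auto
    then show ?thesis using assms by (simp add: norm_mult)
  qed
  finally have le: "cmod ?D \<le> cmod (z - complex_of_real a) + g / Im z" by simp
  have "cmod ?D > 0" using tl_den_nz[OF assms] by simp
  then show ?thesis unfolding tl_Suc using le by (simp add: norm_divide frac_le)
qed

lemma tl_lim:
  assumes "g \<ge> 0" "Im z > 0" and lim: "(\<lambda>n. tlc a g n z) \<longlonglongrightarrow> L"
  shows "Im L \<le> 0" "L \<noteq> 0"
    "complex_of_real g * L\<^sup>2 - (z - complex_of_real a) * L + 1 = 0"
proof -
  have "(\<lambda>n. Im (tlc a g n z)) \<longlonglongrightarrow> Im L" by (intro tendsto_intros lim)
  then show "Im L \<le> 0"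
    by (rule LIMSEQ_le_const2) (use tl_props[OF assms(1,2)] in auto)
  have limS: "(\<lambda>n. tlc a g (Suc n) z) \<longlonglongrightarrow> L" using lim by (rule LIMSEQ_Suc)
  have c: "0 < 1 / (cmod (z - complex_of_real a) + g / Im z)"
  proof -
    have "0 < cmod (z - complex_of_real a)" using assms by (auto simp: complex_eq_iff)
    moreover have "0 \<le> g / Im z" using assms by simp
    ultimately show ?thesis by (intro divide_pos_pos add_pos_nonneg) auto
  qed
  have "(\<lambda>n. cmod (tlc a g (Suc n) z)) \<longlonglongrightarrow> cmod L" by (intro tendsto_intros limS)
  then have "1 / (cmod (z - complex_of_real a) + g / Im z) \<le> cmod L"
    by (rule LIMSEQ_le_const) (use tl_lower[OF assms(1,2)] in auto)
  with c show "L \<noteq> 0" by auto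
  have eq: "\<And>n. tlc a g (Suc n) z * (z - complex_of_real a - complex_of_real g * tlc a g n z) = 1"
    unfolding tl_Suc using tl_den_nz[OF assms(1,2)] by simp
  have "(\<lambda>n. tlc a g (Suc n) z * (z - complex_of_real a - complex_of_real g * tlc a g n z))
      \<longlonglongrightarrow> L * (z - complex_of_real a - complex_of_real g * L)"
    by (intro tendsto_intros limS lim)
  then have "L * (z - complex_of_real a - complex_of_real g * L) = 1"
    unfolding eq using LIMSEQ_unique tendsto_const by blast
  then show "complex_of_real g * L\<^sup>2 - (z - complex_of_real a) * L + 1 = 0"
    by (simp add: algebra_simps power2_eq_square)
qed

lemma root_unique:
  assumes "g \<ge> 0" "Im w > 0" "Im L1 \<le> 0" "Im L2 \<le> 0"
    and "complex_of_real g * L1\<^sup>2 - (w - complex_of_real a) * L1 + 1 = 0"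
    and "complex_of_real g * L2\<^sup>2 - (w - complex_of_real a) * L2 + 1 = 0"
  shows "L1 = L2"
proof (rule ccontr)
  assume ne: "L1 \<noteq> L2"
  have "(L1 - L2) * (complex_of_real g * (L1 + L2) - (w - complex_of_real a)) = 0"
  proof -
    have "(L1 - L2) * (complex_of_real g * (L1 + L2) - (w - complex_of_real a)) =
      (complex_of_real g * L1\<^sup>2 - (w - complex_of_real a) * L1 + 1) -
      (complex_of_real g * L2\<^sup>2 - (w - complex_of_real a) * L2 + 1)"
      by (simp add: algebra_simps power2_eq_square)
    then show ?thesis using assms(5,6) by simp
  qed
  then have "complex_of_real g * (L1 + L2) = w - complex_of_real a" using ne by simp
  then have "Im (complex_of_real g * (L1 + L2)) = Im (w - complex_of_real a)" by simp
  then have "g * (Im L1 + Im L2) = Im w" by simp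
  moreover have "g * (Im L1 + Im L2) \<le> 0" using assms by (simp add: mult_nonneg_nonpos)
  ultimately show False using assms by simp
qed




lemma meix_cm:
  assumes "real_prob m" "compact_support m"
  shows "\<exists>K. K \<ge> 1 \<and> cm m K"
proof -
  have ps: "prob_space m" and sb: "sets m = sets borel" using assms(1) unfolding real_prob_def by auto
  interpret prob_space m by (rule ps)
  obtain K0 where K0: "compact K0" "emeasure m K0 = 1" using assms(2) unfolding compact_support_def by blast
  obtain B where B: "\<forall>x\<in>K0. norm x \<le> B" using compact_imp_bounded[OF K0(1)] unfolding bounded_iff by blast
  have "prob K0 = 1" using K0(2) by (simp add: emeasure_eq_measure)
  then have "AE x in m. x \<in> K0" by (rule AE_prob_1)
  then have ae: "AE x in m. \<bar>x\<bar> \<le> max B 1" by eventually_elim (use B in auto)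
  have "cm m (max B 1)" by unfold_locales (use ps sb ae in auto)
  then show ?thesis by (intro exI[of _ "max B 1"]) auto
qed

lemma meix_cm':
  assumes "is_free_meixner m b c \<beta> \<gamma>"
  shows "\<exists>K. K \<ge> 1 \<and> cm m K"
  using assms meix_cm unfolding is_free_meixner_def by blast

lemma meixner_G:
  assumes fm: "is_free_meixner m b c \<beta> \<gamma>" and g: "\<gamma> > 0" "c + \<gamma> \<ge> 0" and z: "Im z > 0"
  shows "\<exists>L. (\<lambda>n. tlc (b + \<beta>) (c + \<gamma>) n z) \<longlonglongrightarrow> L \<and>
     cauchy_tr m z = 1 / (z - complex_of_real \<beta> - complex_of_real \<gamma> * L) \<and>
     complex_of_real (c + \<gamma>) * L\<^sup>2 - (z - complex_of_real (b + \<beta>)) * L + 1 = 0 \<and> Im L \<le> 0"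
proof -
  obtain K where K: "K \<ge> 1" "cm m K" using meix_cm'[OF fm] by blast
  interpret cm m K by (rule K(2))
  let ?G = "cauchy_tr m z"
  let ?T = "\<lambda>n. tlc (b + \<beta>) (c + \<gamma>) n z"
  let ?D = "\<lambda>n. z - complex_of_real \<beta> - complex_of_real \<gamma> * ?T n"
  have G0: "?G \<noteq> 0" using ImG_neg[OF z] K(1) by auto
  have "(\<lambda>n. jacobi_cf (\<lambda>n. if n = 0 then \<beta> else b + \<beta>) (\<lambda>n. if n = 0 then \<gamma> else c + \<gamma>) n 0 z) \<longlonglongrightarrow> ?G"
    using fm z unfolding is_free_meixner_def has_jacobi_params_def by blast
  then have "(\<lambda>n. jacobi_cf (\<lambda>n. if n = 0 then \<beta> else b + \<beta>) (\<lambda>n. if n = 0 then \<gamma> else c + \<gamma>) (Suc n) 0 z) \<longlonglongrightarrow> ?G"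
    by (rule LIMSEQ_Suc)
  then have l1: "(\<lambda>n. 1 / ?D n) \<longlonglongrightarrow> ?G" by (simp only: meix_cf)
  have "(\<lambda>n. 1 / (1 / ?D n)) \<longlonglongrightarrow> 1 / ?G" by (intro tendsto_intros l1 G0)
  then have l2: "?D \<longlonglongrightarrow> 1 / ?G" by simp
  have "(\<lambda>n. (z - complex_of_real \<beta> - ?D n) / complex_of_real \<gamma>) \<longlonglongrightarrow> (z - complex_of_real \<beta> - 1 / ?G) / complex_of_real \<gamma>"
    by (intro tendsto_intros l2) (use g in auto)
  moreover have "\<And>n. (z - complex_of_real \<beta> - ?D n) / complex_of_real \<gamma> = ?T n" using g by (simp add: field_simps)
  ultimately have lim: "?T \<longlonglongrightarrow> (z - complex_of_real \<beta> - 1 / ?G) / complex_of_real \<gamma>" by simp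
  define L where "L = (z - complex_of_real \<beta> - 1 / ?G) / complex_of_real \<gamma>"
  have "z - complex_of_real \<beta> - complex_of_real \<gamma> * L = 1 / ?G" unfolding L_def using g by (simp add: field_simps)
  then have GL: "?G = 1 / (z - complex_of_real \<beta> - complex_of_real \<gamma> * L)" by simp
  have lim': "?T \<longlonglongrightarrow> L" using lim unfolding L_def .
  show ?thesis using tl_lim[OF g(2) z lim'] lim' GL by blast
qed

lemma tlc_shift: "tlc a g n (z - complex_of_real s) = tlc (a + s) g n z"
proof (induction n)
  case 0 then show ?case by simp
next
  case (Suc n) then show ?case by (simp only: tl_Suc Suc.IH) (simp add: algebra_simps)
qed


lemma mono_G:
  assumes "is_monotone_conv \<mu> \<nu> \<rho>" "Im z > 0"
  shows "cauchy_tr \<rho> z = cauchy_tr \<mu> (1 / cauchy_tr \<nu> z)"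
proof -
  have "1 / cauchy_tr \<rho> z = 1 / cauchy_tr \<mu> (1 / cauchy_tr \<nu> z)"
    using assms unfolding is_monotone_conv_def recip_cauchy_tr_def by blast
  then show ?thesis by (simp add: divide_inverse)
qed

lemma part1_G:
  assumes g: "\<gamma> > 0" "\<gamma>' \<ge> 0" "c \<ge> - \<gamma>"
    and fmu: "is_free_meixner \<mu> b c \<beta> \<gamma>" and fnu: "is_free_meixner \<nu> (b + \<beta>) (c + \<gamma>) \<beta>' \<gamma>'"
    and mc: "is_monotone_conv \<mu> \<nu> \<rho>" and z: "Im z > 0"
  shows "\<exists>L'. (\<lambda>n. tlc (b + \<beta> + \<beta>') (c + \<gamma> + \<gamma>') n z) \<longlonglongrightarrow> L' \<and> Im L' \<le> 0 \<and>
     cauchy_tr \<rho> z = 1 / (z - complex_of_real (\<beta> + \<beta>') - complex_of_real (\<gamma> + \<gamma>') * L')"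
proof (cases "\<gamma>' = 0")
  case False
  then have g': "\<gamma>' > 0" using g by auto
  obtain L' where L': "(\<lambda>n. tlc (b + \<beta> + \<beta>') (c + \<gamma> + \<gamma>') n z) \<longlonglongrightarrow> L'"
    "cauchy_tr \<nu> z = 1 / (z - complex_of_real \<beta>' - complex_of_real \<gamma>' * L')"
    "complex_of_real (c + \<gamma> + \<gamma>') * L'\<^sup>2 - (z - complex_of_real (b + \<beta> + \<beta>')) * L' + 1 = 0"
    "Im L' \<le> 0"
    using meixner_G[OF fnu g'] g z by auto
  define w where "w = z - complex_of_real \<beta>' - complex_of_real \<gamma>' * L'"
  have Fw: "1 / cauchy_tr \<nu> z = w" unfolding w_def L'(2) by simp
  have wIm: "Im w > 0" unfolding w_def using z L'(4) g by (simp add: mult_nonneg_nonpos) (smt (verit) mult_nonneg_nonpos)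
  obtain L where L: "(\<lambda>n. tlc (b + \<beta>) (c + \<gamma>) n w) \<longlonglongrightarrow> L"
    "cauchy_tr \<mu> w = 1 / (w - complex_of_real \<beta> - complex_of_real \<gamma> * L)"
    "complex_of_real (c + \<gamma>) * L\<^sup>2 - (w - complex_of_real (b + \<beta>)) * L + 1 = 0"
    "Im L \<le> 0"
    using meixner_G[OF fmu g(1) _ wIm] g by auto
  have q': "complex_of_real (c + \<gamma>) * L'\<^sup>2 - (w - complex_of_real (b + \<beta>)) * L' + 1 = 0"
    using L'(3) unfolding w_def by (simp add: algebra_simps power2_eq_square)
  have "L = L'" by (rule root_unique[OF _ wIm L(4) L'(4) L(3) q']) (use g in auto)
  have "cauchy_tr \<rho> z = cauchy_tr \<mu> w" using mono_G[OF mc z] Fw by simp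
  also have "\<dots> = 1 / (z - complex_of_real (\<beta> + \<beta>') - complex_of_real (\<gamma> + \<gamma>') * L')"
    by (subst L(2)) (simp add: \<open>L = L'\<close> w_def algebra_simps)
  finally show ?thesis using L' by blast
next
  case True
  have "(\<lambda>n. jacobi_cf (\<lambda>n. if n = 0 then \<beta>' else b + \<beta> + \<beta>') (\<lambda>n. if n = 0 then \<gamma>' else c + \<gamma> + \<gamma>') n 0 z) \<longlonglongrightarrow> cauchy_tr \<nu> z"
    using fnu z unfolding is_free_meixner_def has_jacobi_params_def by blast
  then have "(\<lambda>n. jacobi_cf (\<lambda>n. if n = 0 then \<beta>' else b + \<beta> + \<beta>') (\<lambda>n. if n = 0 then \<gamma>' else c + \<gamma> + \<gamma>') (Suc n) 0 z) \<longlonglongrightarrow> cauchy_tr \<nu> z"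
    by (rule LIMSEQ_Suc)
  then have "(\<lambda>n. 1 / (z - complex_of_real \<beta>')) \<longlonglongrightarrow> cauchy_tr \<nu> z"
    by (simp only: meix_cf True) simp
  then have Gn: "cauchy_tr \<nu> z = 1 / (z - complex_of_real \<beta>')" using LIMSEQ_unique tendsto_const by blast
  define w where "w = z - complex_of_real \<beta>'"
  have Fw: "1 / cauchy_tr \<nu> z = w" unfolding w_def Gn by simp
  have wIm: "Im w > 0" unfolding w_def using z by simp
  obtain L where L: "(\<lambda>n. tlc (b + \<beta>) (c + \<gamma>) n w) \<longlonglongrightarrow> L"
    "cauchy_tr \<mu> w = 1 / (w - complex_of_real \<beta> - complex_of_real \<gamma> * L)"
    "Im L \<le> 0"
    using meixner_G[OF fmu g(1) _ wIm] g by auto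
  have "(\<lambda>n. tlc (b + \<beta> + \<beta>') (c + \<gamma> + \<gamma>') n z) \<longlonglongrightarrow> L"
    using L(1) unfolding w_def tlc_shift True by simp
  moreover have "cauchy_tr \<rho> z = cauchy_tr \<mu> w" using mono_G[OF mc z] Fw by simp
  moreover have "\<dots> = 1 / (z - complex_of_real (\<beta> + \<beta>') - complex_of_real (\<gamma> + \<gamma>') * L)"
    by (subst L(2)) (simp add: w_def True algebra_simps)
  ultimately show ?thesis using L(3) by auto
qed




lemma est:
  assumes K: "K \<ge> 1" and cmu: "cm \<mu> K" and cnu: "cm \<nu> K"
    and x: "\<bar>x\<bar> \<ge> 4 * K + 1" and e: "0 < e" "e \<le> 1"
  shows "- Im (cauchy_tr \<mu> (1 / cauchy_tr \<nu> (Complex x e))) \<le> 9 * e"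
proof -
  define z where "z = Complex x e"
  define d where "d = \<bar>x\<bar> - K"
  define X where "X = cmod z"
  have d: "d \<ge> 3 * K + 1" unfolding d_def using x by simp
  have dpos: "d > 0" using d K by simp
  have H: "\<And>t. \<bar>t\<bar> \<le> K \<Longrightarrow> d \<le> cmod (z - complex_of_real t)"
  proof -
    fix t :: real assume t: "\<bar>t\<bar> \<le> K"
    have "\<bar>Re (z - complex_of_real t)\<bar> \<le> cmod (z - complex_of_real t)" by (rule abs_Re_le_cmod)
    moreover have "Re (z - complex_of_real t) = x - t" unfolding z_def by simp
    ultimately show "d \<le> cmod (z - complex_of_real t)" unfolding d_def using t by linarith
  qed
  have Xl: "X \<ge> \<bar>x\<bar>" unfolding X_def z_def using abs_Re_le_cmod[of "Complex x e"] by simp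
  have Xu: "X \<le> \<bar>x\<bar> + 1" unfolding X_def z_def using cmod_le[of "Complex x e"] e by simp
  have Xpos: "X > 0" using Xl x K by linarith
  have "2 * d = 2 * \<bar>x\<bar> - 2 * K" unfolding d_def by simp
  then have X2d: "X \<le> 2 * d" using Xu x K by linarith
  define u where "u = cauchy_tr \<nu> z"
  have zu: "cmod (z * u - 1) \<le> K / d" unfolding u_def by (rule cm.zG1[OF cnu dpos H])
  have Kd: "K / d \<le> 1 / 3" using d K dpos by (simp add: divide_simps)
  have "1 - cmod (z * u - 1) \<le> cmod (z * u)"
    using norm_triangle_ineq2[of 1 "z * u"] by (simp add: norm_minus_commute)
  moreover have "cmod (z * u - 1) \<le> 1 / 3" using zu Kd by linarith
  ultimately have "cmod (z * u) \<ge> 2 / 3" by linarith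
  then have "X * cmod u \<ge> 2 / 3" unfolding X_def by (simp add: norm_mult)
  then have ul: "cmod u \<ge> 2 / (3 * X)" using Xpos by (simp add: divide_simps algebra_simps)
  have upos: "cmod u > 0" using ul Xpos by (smt (verit) divide_pos_pos)
  define F where "F = 1 / u"
  have "F - z = (1 - z * u) / u" unfolding F_def using upos by (simp add: field_simps)
  then have "cmod (F - z) = cmod (z * u - 1) / cmod u" by (simp add: norm_divide norm_minus_commute)
  also have "\<dots> \<le> (K / d) / (2 / (3 * X))"
    using zu ul upos Xpos K dpos by (intro frac_le) auto
  also have "\<dots> = (3 * K / 2) * (X / d)" using Xpos dpos by (simp add: field_simps)
  also have "\<dots> \<le> (3 * K / 2) * 2"
    using X2d dpos K by (intro mult_left_mono) (auto simp: divide_simps)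
  finally have Fz: "cmod (F - z) \<le> 3 * K" by simp
  have "\<bar>Re F - x\<bar> \<le> 3 * K"
    using abs_Re_le_cmod[of "F - z"] Fz unfolding z_def by simp
  then have ReF: "\<bar>Re F\<bar> \<ge> K + 1" using x by linarith
  have HF: "\<And>t. \<bar>t\<bar> \<le> K \<Longrightarrow> 1 \<le> cmod (F - complex_of_real t)"
  proof -
    fix t :: real assume t: "\<bar>t\<bar> \<le> K"
    have "\<bar>Re (F - complex_of_real t)\<bar> \<le> cmod (F - complex_of_real t)" by (rule abs_Re_le_cmod)
    then show "1 \<le> cmod (F - complex_of_real t)" using t ReF by simp
  qed
  have zIm: "Im z > 0" unfolding z_def using e by simp
  have uIm: "Im u < 0" unfolding u_def using cm.ImG_neg[OF cnu zIm] K by simp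
  have uIm2: "- Im u \<le> e / d\<^sup>2" unfolding u_def using cm.ImG_upper[OF cnu zIm dpos H] unfolding z_def by simp
  have ImF: "Im F = - Im u / (cmod u)\<^sup>2" unfolding F_def by (simp add: Im_divide cmod_power2)
  have FIm: "Im F > 0" unfolding ImF using uIm upos by (simp add: divide_neg_pos)
  have "Im F \<le> (e / d\<^sup>2) / (2 / (3 * X))\<^sup>2"
    unfolding ImF using uIm2 ul uIm Xpos by (intro frac_le power_mono) auto
  also have "\<dots> = (9 / 4) * e * (X / d)\<^sup>2" using Xpos dpos by (simp add: field_simps power2_eq_square)
  also have "\<dots> \<le> (9 / 4) * e * 2\<^sup>2"
    using X2d dpos Xpos e by (intro mult_left_mono power_mono) (auto simp: divide_simps)
  finally have FIm2: "Im F \<le> 9 * e" by simp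
  have "- Im (cauchy_tr \<mu> F) \<le> Im F / 1\<^sup>2" by (rule cm.ImG_upper[OF cmu FIm _ HF]) auto
  then show ?thesis using FIm2 unfolding F_def u_def z_def by simp
qed


lemma rho_cs:
  assumes K: "K \<ge> 1" and cmu: "cm \<mu> K" and cnu: "cm \<nu> K" and rp: "real_prob \<rho>"
    and GG: "\<And>z. Im z > 0 \<Longrightarrow> cauchy_tr \<rho> z = cauchy_tr \<mu> (1 / cauchy_tr \<nu> z)"
  shows "compact_support \<rho>"
proof -
  have pmr: "pm \<rho>" using rp unfolding real_prob_def pm_def by blast
  interpret pm \<rho> by (rule pmr)
  interpret prob_space \<rho> by (rule ps)
  define R where "R = 4 * K + 1"
  have bb: "measure \<rho> (ball x e) \<le> 18 * e\<^sup>2" if x: "\<bar>x\<bar> \<ge> R" and e: "0 < e" "e \<le> 1" for x e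
  proof -
    have "measure \<rho> (ball x e) \<le> 2 * e * (- Im (cauchy_tr \<rho> (Complex x e)))" by (rule ball_bound[OF e(1)])
    also have "- Im (cauchy_tr \<rho> (Complex x e)) \<le> 9 * e"
      using GG[of "Complex x e"] est[OF K cmu cnu _ e] x e unfolding R_def by simp
    then have "2 * e * (- Im (cauchy_tr \<rho> (Complex x e))) \<le> 2 * e * (9 * e)"
      using e by (intro mult_left_mono) auto
    finally show ?thesis by (simp add: power2_eq_square)
  qed
  have n1: "measure \<rho> {R + real k..R + real k + 1} = 0" for k :: nat
  proof (rule cover)
    fix x e :: real assume "x \<in> {R + real k..R + real k + 1}" "0 < e" "e \<le> 1"
    then show "measure \<rho> (ball x e) \<le> 18 * e\<^sup>2" using K by (intro bb) (simp_all add: R_def)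
  qed simp
  have n2: "measure \<rho> {- (R + real k + 1)..- (R + real k + 1) + 1} = 0" for k :: nat
  proof (rule cover)
    fix x e :: real assume "x \<in> {- (R + real k + 1)..- (R + real k + 1) + 1}" "0 < e" "e \<le> 1"
    then show "measure \<rho> (ball x e) \<le> 18 * e\<^sup>2" using K by (intro bb) (simp_all add: R_def)
  qed simp
  define S where "S = (\<Union>k::nat. {R + real k..R + real k + 1} \<union> {- (R + real k + 1)..- (R + real k + 1) + 1})"
  have "S \<in> null_sets \<rho>" unfolding S_def
  proof (intro null_sets_UN null_sets.Un)
    fix k :: nat
    show "{R + real k..R + real k + 1} \<in> null_sets \<rho>"
    proof (rule null_setsI)
      show "emeasure \<rho> {R + real k..R + real k + 1} = 0"
        unfolding emeasure_eq_measure n1[of k] by simp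
    qed (simp add: sb)
    show "{- (R + real k + 1)..- (R + real k + 1) + 1} \<in> null_sets \<rho>"
    proof (rule null_setsI)
      show "emeasure \<rho> {- (R + real k + 1)..- (R + real k + 1) + 1} = 0"
        unfolding emeasure_eq_measure n2[of k] by simp
    qed (simp add: sb)
  qed
  then have "AE t in \<rho>. t \<notin> S" by (rule AE_not_in)
  then have ae: "AE t in \<rho>. t \<in> {-R..R}"
  proof eventually_elim
    case (elim t)
    show ?case
    proof (rule ccontr)
      assume "t \<notin> {-R..R}"
      then consider "t > R" | "t < -R" by auto
      then show False
      proof cases
        case 1
        define k where "k = nat \<lfloor>t - R\<rfloor>"
        have "real k \<le> t - R" "t - R < real k + 1" using 1 unfolding k_def by linarith+
        then have "t \<in> {R + real k..R + real k + 1}" by auto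
        then have "t \<in> S" unfolding S_def by blast
        then show False using elim by simp
      next
        case 2
        define k where "k = nat \<lfloor>- t - R\<rfloor>"
        have "real k \<le> - t - R" "- t - R < real k + 1" using 2 unfolding k_def by linarith+
        then have "t \<in> {- (R + real k + 1)..- (R + real k + 1) + 1}" by auto
        then have "t \<in> S" unfolding S_def by blast
        then show False using elim by simp
      qed
    qed
  qed
  have "{-R..R} \<in> events" using sb by simp
  then have "prob {-R..R} = 1" using ae AE_in_set_eq_1 by blast
  then have "emeasure \<rho> {-R..R} = 1" by (simp add: emeasure_eq_measure)
  then show ?thesis unfolding compact_support_def by (intro exI[of _ "{-R..R}"]) auto
qed

lemma part1:
  assumes g: "\<gamma> > 0" "\<gamma>' \<ge> 0" "c \<ge> - \<gamma>"
    and fmu: "is_free_meixner \<mu> b c \<beta> \<gamma>" and fnu: "is_free_meixner \<nu> (b + \<beta>) (c + \<gamma>) \<beta>' \<gamma>'"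
    and mc: "is_monotone_conv \<mu> \<nu> \<rho>"
  shows "is_free_meixner \<rho> b c (\<beta> + \<beta>') (\<gamma> + \<gamma>')"
proof -
  have rp: "real_prob \<rho>" using mc unfolding is_monotone_conv_def by blast
  obtain K1 where K1: "K1 \<ge> 1" "cm \<mu> K1" using meix_cm'[OF fmu] by blast
  obtain K2 where K2: "K2 \<ge> 1" "cm \<nu> K2" using meix_cm'[OF fnu] by blast
  define K where "K = max K1 K2"
  have cmu: "cm \<mu> K"
  proof -
    interpret cm \<mu> K1 by (rule K1(2))
    have "AE t in \<mu>. \<bar>t\<bar> \<le> K" using ae by eventually_elim (simp add: K_def)
    then show ?thesis using ps sb unfolding cm_def cm_axioms_def pm_def by blast
  qed
  have cnu: "cm \<nu> K"
  proof -
    interpret cm \<nu> K2 by (rule K2(2))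
    have "AE t in \<nu>. \<bar>t\<bar> \<le> K" using ae by eventually_elim (simp add: K_def)
    then show ?thesis using ps sb unfolding cm_def cm_axioms_def pm_def by blast
  qed
  have K: "K \<ge> 1" using K1 unfolding K_def by simp
  have cs: "compact_support \<rho>"
    by (rule rho_cs[OF K cmu cnu rp]) (rule mono_G[OF mc])
  have jac: "has_jacobi_params \<rho> (\<lambda>n. if n = 0 then \<beta> + \<beta>' else b + (\<beta> + \<beta>')) (\<lambda>n. if n = 0 then \<gamma> + \<gamma>' else c + (\<gamma> + \<gamma>'))"
    unfolding has_jacobi_params_def
  proof (intro allI impI)
    fix z :: complex assume z: "Im z > 0"
    obtain L' where L': "(\<lambda>n. tlc (b + \<beta> + \<beta>') (c + \<gamma> + \<gamma>') n z) \<longlonglongrightarrow> L'" "Im L' \<le> 0"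
      "cauchy_tr \<rho> z = 1 / (z - complex_of_real (\<beta> + \<beta>') - complex_of_real (\<gamma> + \<gamma>') * L')"
      using part1_G[OF g fmu fnu mc z] by blast
    have e1: "b + (\<beta> + \<beta>') = b + \<beta> + \<beta>'" "c + (\<gamma> + \<gamma>') = c + \<gamma> + \<gamma>'" by simp_all
    have "Im (z - complex_of_real (\<beta> + \<beta>') - complex_of_real (\<gamma> + \<gamma>') * L') \<ge> Im z"
      by (rule den_Im) (use g L'(2) in auto)
    then have "Im (z - complex_of_real (\<beta> + \<beta>') - complex_of_real (\<gamma> + \<gamma>') * L') > 0" using z by linarith
    then have nz: "z - complex_of_real (\<beta> + \<beta>') - complex_of_real (\<gamma> + \<gamma>') * L' \<noteq> 0"
      by (metis zero_complex.sel(2) less_irrefl)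
    have "(\<lambda>n. 1 / (z - complex_of_real (\<beta> + \<beta>') - complex_of_real (\<gamma> + \<gamma>') * tlc (b + \<beta> + \<beta>') (c + \<gamma> + \<gamma>') n z))
       \<longlonglongrightarrow> 1 / (z - complex_of_real (\<beta> + \<beta>') - complex_of_real (\<gamma> + \<gamma>') * L')"
      by (intro tendsto_intros L'(1) nz)
    then have "(\<lambda>n. jacobi_cf (\<lambda>n. if n = 0 then \<beta> + \<beta>' else b + (\<beta> + \<beta>')) (\<lambda>n. if n = 0 then \<gamma> + \<gamma>' else c + (\<gamma> + \<gamma>')) (Suc n) 0 z)
       \<longlonglongrightarrow> cauchy_tr \<rho> z"
      unfolding meix_cf e1 L'(3) .
    then show "(\<lambda>n. jacobi_cf (\<lambda>n. if n = 0 then \<beta> + \<beta>' else b + (\<beta> + \<beta>')) (\<lambda>n. if n = 0 then \<gamma> + \<gamma>' else c + (\<gamma> + \<gamma>')) n 0 z)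
       \<longlonglongrightarrow> cauchy_tr \<rho> z" by (rule LIMSEQ_imp_Suc)
  qed
  show ?thesis unfolding is_free_meixner_def using rp cs jac by blast
qed




definition Pf :: "real \<Rightarrow> real \<Rightarrow> real \<Rightarrow> complex \<Rightarrow> complex \<Rightarrow> complex" where
  "Pf b c t z G = complex_of_real (c + t) * (z * G - 1)\<^sup>2
     - complex_of_real t * (z - complex_of_real b) * (z * G - 1) * G + (complex_of_real t)\<^sup>2 * G\<^sup>2"

lemma quad_sel:
  fixes A B C s0 s1 :: complex
  assumes "A * s0\<^sup>2 - B * s0 + C = 0" "A * s1\<^sup>2 - B * s1 + C = 0"
    and "cmod A * (cmod (s0 - 1) + cmod (s1 - 1)) < cmod (2 * A - B)"
  shows "s0 = s1"
proof (rule ccontr)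
  assume ne: "s0 \<noteq> s1"
  have "(s0 - s1) * (A * (s0 + s1) - B) = (A * s0\<^sup>2 - B * s0 + C) - (A * s1\<^sup>2 - B * s1 + C)"
    by (simp add: algebra_simps power2_eq_square)
  then have "A * (s0 + s1) - B = 0" using assms(1,2) ne by simp
  moreover have "A * (s0 + s1) - B = (2 * A - B) + A * ((s0 - 1) + (s1 - 1))" by (simp add: algebra_simps)
  ultimately have "2 * A - B = - (A * ((s0 - 1) + (s1 - 1)))" by (simp add: algebra_simps)
  then have "cmod (2 * A - B) = cmod A * cmod ((s0 - 1) + (s1 - 1))" by (simp add: norm_mult)
  also have "\<dots> \<le> cmod A * (cmod (s0 - 1) + cmod (s1 - 1))" by (intro mult_left_mono norm_triangle_ineq) auto
  finally show False using assms(3) by simp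
qed

lemma csqrt_near: "cmod (csqrt v - 1) \<le> cmod (v - 1)"
proof -
  let ?Q = "csqrt v"
  have "v - 1 = (?Q - 1) * (?Q + 1)" by (simp add: algebra_simps power2_eq_square[symmetric])
  then have eq: "cmod (v - 1) = cmod (?Q - 1) * cmod (?Q + 1)" by (simp add: norm_mult)
  have "1 \<le> Re (?Q + 1)" using Re_csqrt[of v] by simp
  also have "\<dots> \<le> cmod (?Q + 1)" by (rule complex_Re_le_cmod)
  finally have "cmod (?Q - 1) * 1 \<le> cmod (?Q - 1) * cmod (?Q + 1)" by (intro mult_left_mono) auto
  then show ?thesis using eq by simp
qed

lemma P_s:
  assumes "z \<noteq> 0"
  shows "Pf b c t z (s / z) = (complex_of_real c + complex_of_real t * complex_of_real b / z + (complex_of_real t)\<^sup>2 / z\<^sup>2) * s\<^sup>2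
     - (2 * complex_of_real c + complex_of_real t + complex_of_real t * complex_of_real b / z) * s + complex_of_real (c + t)"
  using assms unfolding Pf_def by (simp add: field_simps power2_eq_square)

lemma P_v:
  assumes "w \<noteq> 0"
  shows "Pf b c t (v / w) w = complex_of_real c * v\<^sup>2
     - (2 * complex_of_real c + complex_of_real t - complex_of_real t * complex_of_real b * w) * v
     + (complex_of_real (c + t) - complex_of_real t * complex_of_real b * w + (complex_of_real t)\<^sup>2 * w\<^sup>2)"
  using assms unfolding Pf_def by (simp add: field_simps power2_eq_square)

definition Sf :: "real \<Rightarrow> real \<Rightarrow> complex \<Rightarrow> complex" where
  "Sf b c w = 2 * w / ((1 - complex_of_real b * w) + csqrt ((1 - complex_of_real b * w)\<^sup>2 - 4 * complex_of_real c * w\<^sup>2))"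

lemma S_eq:
  assumes "(1 - complex_of_real b * w) + csqrt ((1 - complex_of_real b * w)\<^sup>2 - 4 * complex_of_real c * w\<^sup>2) \<noteq> 0"
  shows "complex_of_real c * w * (Sf b c w)\<^sup>2 - (1 - complex_of_real b * w) * Sf b c w + w = 0"
proof -
  define A where "A = 1 - complex_of_real b * w"
  define Q where "Q = csqrt (A\<^sup>2 - 4 * complex_of_real c * w\<^sup>2)"
  have Q2: "Q\<^sup>2 = A\<^sup>2 - 4 * complex_of_real c * w\<^sup>2" unfolding Q_def by simp
  have nz: "A + Q \<noteq> 0" using assms unfolding A_def Q_def .
  have S: "Sf b c w = 2 * w / (A + Q)" unfolding Sf_def A_def Q_def ..
  have "complex_of_real c * w * (2 * w / (A + Q))\<^sup>2 - A * (2 * w / (A + Q)) + w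
      = w * (4 * complex_of_real c * w\<^sup>2 - 2 * A * (A + Q) + (A + Q)\<^sup>2) / (A + Q)\<^sup>2"
  proof -
    define D where "D = A + Q"
    have D: "D \<noteq> 0" using nz unfolding D_def .
    have "complex_of_real c * w * (2 * w / D)\<^sup>2 - A * (2 * w / D) + w
      = w * (4 * complex_of_real c * w\<^sup>2 - 2 * A * D + D\<^sup>2) / D\<^sup>2"
      using D by (simp add: field_simps power2_eq_square)
    then show ?thesis unfolding D_def .
  qed
  also have "4 * complex_of_real c * w\<^sup>2 - 2 * A * (A + Q) + (A + Q)\<^sup>2 = Q\<^sup>2 - (A\<^sup>2 - 4 * complex_of_real c * w\<^sup>2)"
    by (simp add: algebra_simps power2_eq_square)
  also have "\<dots> = 0" using Q2 by simp
  finally show ?thesis unfolding S A_def by simp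
qed

lemma P_cand:
  assumes "w \<noteq> 0" "complex_of_real c * w * S\<^sup>2 - (1 - complex_of_real b * w) * S + w = 0"
  shows "Pf b c t (1 / w + complex_of_real t * S) w = 0"
proof -
  have "Pf b c t (1 / w + complex_of_real t * S) w =
     (complex_of_real t)\<^sup>2 * w * (complex_of_real c * w * S\<^sup>2 - (1 - complex_of_real b * w) * S + w)"
    using assms(1) unfolding Pf_def by (simp add: field_simps power2_eq_square)
  then show ?thesis using assms(2) by simp
qed


lemma Pf_cnj: "Pf b c t (cnj z) (cnj X) = cnj (Pf b c t z X)"
  unfolding Pf_def by simp

lemma P_up:
  assumes fm: "is_free_meixner m b c 0 t" and t: "t > 0" "c + t \<ge> 0" and z: "Im z > 0"
  shows "Pf b c t z (cauchy_tr m z) = 0"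
proof -
  obtain L where L: "cauchy_tr m z = 1 / (z - complex_of_real 0 - complex_of_real t * L)"
    "complex_of_real (c + t) * L\<^sup>2 - (z - complex_of_real (b + 0)) * L + 1 = 0" "Im L \<le> 0"
    using meixner_G[OF fm t z] by blast
  define D where "D = z - complex_of_real t * L"
  have "Im D \<ge> Im z" unfolding D_def using den_Im[of t L z 0] t L(3) by simp
  then have DIm: "Im D > 0" using z by linarith
  then have D: "D \<noteq> 0" by (metis zero_complex.sel(2) less_irrefl)
  have G: "cauchy_tr m z = 1 / D" unfolding D_def L(1) by simp
  define X where "X = 1 / D"
  have zX: "z * X - 1 = complex_of_real t * L * X" using D unfolding X_def D_def by (simp add: field_simps)
  have "Pf b c t z X = (complex_of_real t)\<^sup>2 * X\<^sup>2 *
      (complex_of_real (c + t) * L\<^sup>2 - (z - complex_of_real b) * L + 1)"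
    unfolding Pf_def zX by (simp add: algebra_simps power2_eq_square)
  then have "Pf b c t z (1 / D) = (complex_of_real t)\<^sup>2 * X\<^sup>2 *
      (complex_of_real (c + t) * L\<^sup>2 - (z - complex_of_real b) * L + 1)" unfolding X_def .
  then show ?thesis unfolding G using L(2) by simp
qed

lemma P_all:
  assumes fm: "is_free_meixner m b c 0 t" and t: "t > 0" "c + t \<ge> 0" and cmK: "cm m K"
    and z: "cmod z > K"
  shows "Pf b c t z (cauchy_tr m z) = 0"
proof -
  interpret cm m K by (rule cmK)
  consider "Im z > 0" | "Im z < 0" | "Im z = 0" by linarith
  then show ?thesis
  proof cases
    case 1 then show ?thesis by (rule P_up[OF fm t])
  next
    case 2
    then have "Im (cnj z) > 0" by simp
    from P_up[OF fm t this] have "Pf b c t (cnj z) (cauchy_tr m (cnj z)) = 0" .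
    then have "Pf b c t (cnj z) (cnj (cauchy_tr m z)) = 0" by (simp add: G_cnj)
    then have "cnj (Pf b c t z (cauchy_tr m z)) = 0" by (simp only: Pf_cnj)
    then show ?thesis by simp
  next
    case 3
    define d where "d = cmod z - K"
    have dpos: "d > 0" unfolding d_def using z by simp
    have cz: "cmod z = \<bar>Re z\<bar>" using 3 by (simp add: cmod_def)
    define zn where "zn = (\<lambda>n. z + \<i> * complex_of_real (inverse (real (Suc n))))"
    have H: "\<And>w t'. Re w = Re z \<Longrightarrow> \<bar>t'\<bar> \<le> K \<Longrightarrow> d \<le> cmod (w - complex_of_real t')"
    proof -
      fix w and t' :: real assume w: "Re w = Re z" and t': "\<bar>t'\<bar> \<le> K"
      have "\<bar>Re (w - complex_of_real t')\<bar> \<le> cmod (w - complex_of_real t')" by (rule abs_Re_le_cmod)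
      then show "d \<le> cmod (w - complex_of_real t')" using w t' cz unfolding d_def by simp
    qed
    have Rzn: "\<And>n. Re (zn n) = Re z" unfolding zn_def by simp
    have Izn: "\<And>n. Im (zn n) > 0" unfolding zn_def using 3 by simp
    have dn: "\<And>n. cmod (zn n - z) = inverse (real (Suc n))" unfolding zn_def
      by (simp only: add_diff_cancel_left' norm_mult norm_ii norm_of_real mult_1) simp
    have lip: "\<And>n. cmod (cauchy_tr m (zn n) - cauchy_tr m z) \<le> inverse (real (Suc n)) / (d * d)"
      using G_lip[OF dpos H[OF Rzn] dpos H[OF refl]] dn by metis
    have inv0: "(\<lambda>n. inverse (real (Suc n))) \<longlonglongrightarrow> 0" by (rule LIMSEQ_inverse_real_of_nat)
    have dd: "d * d \<noteq> 0" using dpos by simp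
    have "(\<lambda>n. inverse (real (Suc n)) / (d * d)) \<longlonglongrightarrow> 0 / (d * d)" by (intro tendsto_divide inv0 tendsto_const dd)
    then have t0: "(\<lambda>n. inverse (real (Suc n)) / (d * d)) \<longlonglongrightarrow> 0" by simp
    have "(\<lambda>n. cauchy_tr m (zn n) - cauchy_tr m z) \<longlonglongrightarrow> 0"
      by (rule Lim_null_comparison[OF always_eventually t0]) (rule allI, rule lip)
    then have Gl: "(\<lambda>n. cauchy_tr m (zn n)) \<longlonglongrightarrow> cauchy_tr m z" by (rule LIM_zero_cancel)
    have "(\<lambda>n. zn n - z) \<longlonglongrightarrow> 0"
      by (rule Lim_null_comparison[OF always_eventually inv0]) (simp add: dn)
    then have zl: "zn \<longlonglongrightarrow> z" by (rule LIM_zero_cancel)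
    have "(\<lambda>n. Pf b c t (zn n) (cauchy_tr m (zn n))) \<longlonglongrightarrow> Pf b c t z (cauchy_tr m z)"
      unfolding Pf_def by (intro tendsto_intros zl Gl)
    moreover have "\<And>n. Pf b c t (zn n) (cauchy_tr m (zn n)) = 0" using P_up[OF fm t Izn] .
    ultimately have "(\<lambda>n. 0) \<longlonglongrightarrow> Pf b c t z (cauchy_tr m z)" by simp
    then show ?thesis using LIMSEQ_unique tendsto_const by metis
  qed
qed




lemma S_bounds:
  assumes w0: "w \<noteq> 0" and wb: "cmod w * (8 * (\<bar>b\<bar> + 1)) \<le> 1" and wc: "cmod w * (8 * (\<bar>c\<bar> + 1)) \<le> 1"
  shows "(1 - complex_of_real b * w) + csqrt ((1 - complex_of_real b * w)\<^sup>2 - 4 * complex_of_real c * w\<^sup>2) \<noteq> 0"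
    "cmod (Sf b c w) \<le> 2 * cmod w"
proof -
  define A where "A = 1 - complex_of_real b * w"
  define Q where "Q = csqrt (A\<^sup>2 - 4 * complex_of_real c * w\<^sup>2)"
  have bw: "\<bar>b\<bar> * cmod w \<le> 1 / 8" using wb by (simp add: algebra_simps) (smt (verit) norm_ge_zero)
  have cw: "\<bar>c\<bar> * cmod w \<le> 1 / 8" using wc by (simp add: algebra_simps) (smt (verit) norm_ge_zero)
  have w8: "cmod w \<le> 1 / 8" using wb by (simp add: algebra_simps) (smt (verit) norm_ge_zero mult_nonneg_nonneg abs_ge_zero)
  have A1: "cmod (A - 1) \<le> 1 / 8" unfolding A_def using bw by (simp add: norm_mult)
  have Ap1: "cmod (A + 1) \<le> 17 / 8"
  proof -
    have "cmod (A + 1) = cmod ((A - 1) + 2)" by (simp add: algebra_simps)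
    also have "\<dots> \<le> cmod (A - 1) + 2" using norm_triangle_ineq[of "A - 1" 2] by simp
    finally show ?thesis using A1 by simp
  qed
  have "A\<^sup>2 - 4 * complex_of_real c * w\<^sup>2 - 1 = (A - 1) * (A + 1) - 4 * complex_of_real c * w\<^sup>2"
    by (simp add: algebra_simps power2_eq_square)
  then have "cmod (A\<^sup>2 - 4 * complex_of_real c * w\<^sup>2 - 1) \<le> cmod (A - 1) * cmod (A + 1) + 4 * (\<bar>c\<bar> * cmod w) * cmod w"
    apply (simp only:)
    using norm_triangle_ineq4[of "(A - 1) * (A + 1)" "4 * complex_of_real c * w\<^sup>2"]
    by (simp add: norm_mult norm_power power2_eq_square mult.assoc)
  also have "cmod (A - 1) * cmod (A + 1) \<le> (1 / 8) * (17 / 8)"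
    using A1 Ap1 by (intro mult_mono) auto
  also have "4 * (\<bar>c\<bar> * cmod w) * cmod w \<le> 4 * (1 / 8) * (1 / 8)"
    using cw w8 by (intro mult_mono) auto
  finally have v1: "cmod (A\<^sup>2 - 4 * complex_of_real c * w\<^sup>2 - 1) \<le> 21 / 64" by simp
  have Q1: "cmod (Q - 1) \<le> 21 / 64" unfolding Q_def using csqrt_near v1 by (rule order_trans)
  have "cmod ((A + Q) - 2) \<le> cmod (A - 1) + cmod (Q - 1)"
    using norm_triangle_ineq[of "A - 1" "Q - 1"] by (simp add: algebra_simps)
  then have AQ2: "cmod ((A + Q) - 2) \<le> 29 / 64" using A1 Q1 by simp
  have "2 - cmod (A + Q) \<le> cmod ((A + Q) - 2)"
    using norm_triangle_ineq2[of 2 "A + Q"] by (simp add: norm_minus_commute)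
  then have AQ: "cmod (A + Q) \<ge> 1" using AQ2 by simp
  then show "(1 - complex_of_real b * w) + csqrt ((1 - complex_of_real b * w)\<^sup>2 - 4 * complex_of_real c * w\<^sup>2) \<noteq> 0"
    unfolding A_def Q_def by auto
  have "cmod (Sf b c w) = 2 * cmod w / cmod (A + Q)" unfolding Sf_def A_def Q_def by (simp add: norm_divide norm_mult)
  also have "\<dots> \<le> 2 * cmod w / 1" using AQ by (intro divide_left_mono) auto
  finally show "cmod (Sf b c w) \<le> 2 * cmod w" by simp
qed


lemma cand:
  assumes w0: "w \<noteq> 0" and wb: "cmod w * (8 * (\<bar>b\<bar> + 1)) \<le> 1" and wc: "cmod w * (8 * (\<bar>c\<bar> + 1)) \<le> 1"
    and wR: "cmod w * (R + 2) \<le> 1" and R: "R \<ge> 0" and t: "0 < t" "t \<le> 2"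
  shows "cmod (1 / w + complex_of_real t * Sf b c w) > R"
    "cmod ((1 / w + complex_of_real t * Sf b c w) * w - 1) \<le> 4 * (cmod w)\<^sup>2"
    "Pf b c t (1 / w + complex_of_real t * Sf b c w) w = 0"
proof -
  let ?S = "Sf b c w"
  have Sb: "cmod ?S \<le> 2 * cmod w" by (rule S_bounds(2)[OF w0 wb wc])
  have w8: "cmod w \<le> 1 / 8" using wb by (simp add: algebra_simps) (smt (verit) norm_ge_zero mult_nonneg_nonneg abs_ge_zero)
  have wpos: "cmod w > 0" using w0 by simp
  have tS: "cmod (complex_of_real t * ?S) \<le> 4 * cmod w"
  proof -
    have "cmod (complex_of_real t * ?S) = t * cmod ?S" using t by (simp add: norm_mult)
    also have "\<dots> \<le> 2 * (2 * cmod w)" using t Sb by (intro mult_mono) auto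
    finally show ?thesis by simp
  qed
  have "(1 / w + complex_of_real t * ?S) * w - 1 = (complex_of_real t * ?S) * w" using w0 by (simp add: field_simps)
  then have "cmod ((1 / w + complex_of_real t * ?S) * w - 1) = cmod (complex_of_real t * ?S) * cmod w" by (simp add: norm_mult)
  also have "\<dots> \<le> (4 * cmod w) * cmod w" using tS by (intro mult_right_mono) auto
  finally show "cmod ((1 / w + complex_of_real t * ?S) * w - 1) \<le> 4 * (cmod w)\<^sup>2" by (simp add: power2_eq_square)
  have iw: "cmod (1 / w) \<ge> R + 2" using wR wpos by (simp add: norm_divide divide_simps mult.commute)
  have "cmod (1 / w) - cmod (complex_of_real t * ?S) \<le> cmod (1 / w + complex_of_real t * ?S)"
    by (rule norm_diff_ineq)
  then show "cmod (1 / w + complex_of_real t * ?S) > R" using iw tS w8 by linarith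
  show "Pf b c t (1 / w + complex_of_real t * Sf b c w) w = 0"
    by (rule P_cand[OF w0 S_eq[OF S_bounds(1)[OF w0 wb wc]]])
qed

lemma zpow_bounds:
  assumes z: "cmod z \<ge> 4 * (\<bar>b\<bar> + 1)" and t: "0 < t" "t \<le> 2"
  shows "t * \<bar>b\<bar> / cmod z \<le> t / 4" "t\<^sup>2 / (cmod z)\<^sup>2 \<le> t / 8"
proof -
  have zp: "cmod z > 0" using z by (smt (verit) abs_ge_zero)
  have "\<bar>b\<bar> / cmod z \<le> 1 / 4" using z zp by (simp add: divide_simps)
  then show "t * \<bar>b\<bar> / cmod z \<le> t / 4" using t mult_left_mono[of "\<bar>b\<bar> / cmod z" "1/4" t] by simp
  have z4: "cmod z \<ge> 4" using z by (smt (verit) abs_ge_zero)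
  have "4 * 4 \<le> cmod z * cmod z" using mult_mono[OF z4 z4] by simp
  then have "(cmod z)\<^sup>2 \<ge> 4 * 4" by (simp add: power2_eq_square)
  then have "t / (cmod z)\<^sup>2 \<le> 2 / 16" using t zp by (simp add: divide_simps)
  then have "t * (t / (cmod z)\<^sup>2) \<le> t * (2 / 16)" using t by (intro mult_left_mono) auto
  then show "t\<^sup>2 / (cmod z)\<^sup>2 \<le> t / 8" by (simp add: power2_eq_square)
qed

lemma exist_sel:
  assumes fm: "is_free_meixner m b c 0 t" and t: "1 \<le> t" "t \<le> 2" "c + t \<ge> 0"
    and cmK: "cm m K" and K: "K \<ge> 1"
    and R: "R \<ge> K + 8 * (\<bar>c\<bar> + 1) * K + 4 * (\<bar>b\<bar> + 1) + 4"
    and z: "cmod z > R" and w0: "w \<noteq> 0" and wc: "cmod w * (8 * (\<bar>c\<bar> + 1)) \<le> 1" and w8: "cmod w \<le> 1 / 8"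
    and Pzw: "Pf b c t z w = 0" and zw: "cmod (z * w - 1) \<le> 4 * (cmod w)\<^sup>2"
  shows "cauchy_tr m z = w"
proof -
  interpret cm m K by (rule cmK)
  define C0 where "C0 = \<bar>c\<bar> + 1"
  have C0: "C0 \<ge> 1" unfolding C0_def by simp
  have zK: "cmod z > K" using R z K C0_def by (smt (verit) mult_nonneg_nonneg abs_ge_zero)
  have z0: "z \<noteq> 0" using zK K by auto
  define G where "G = cauchy_tr m z"
  have PzG: "Pf b c t z G = 0" unfolding G_def by (rule P_all[OF fm _ t(3) cmK zK]) (use t in simp)
  define d where "d = cmod z - K"
  have d8: "d \<ge> 8 * C0 * K" using R z unfolding d_def C0_def by simp
  have dpos: "d > 0" using d8 C0 K by (smt (verit) mult_pos_pos)
  have H: "\<And>t'. \<bar>t'\<bar> \<le> K \<Longrightarrow> d \<le> cmod (z - complex_of_real t')"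
  proof -
    fix t' :: real assume "\<bar>t'\<bar> \<le> K"
    moreover have "cmod z - cmod (complex_of_real t') \<le> cmod (z - complex_of_real t')" by (rule norm_triangle_ineq2)
    ultimately show "d \<le> cmod (z - complex_of_real t')" unfolding d_def by simp
  qed
  have s0: "cmod (z * G - 1) \<le> K / d" unfolding G_def by (rule zG1[OF dpos H])
  have pp: "0 < d * (8 * C0 * K)" using d8 K C0 dpos by (intro mult_pos_pos) auto
  have "K / d \<le> K / (8 * C0 * K)" using d8 K C0 pp by (intro divide_left_mono) auto
  also have "\<dots> = 1 / (8 * C0)" using K by simp
  finally have s0': "cmod (z * G - 1) \<le> 1 / (8 * C0)" using s0 by linarith
  have "4 * (cmod w)\<^sup>2 = 4 * cmod w * cmod w" by (simp add: power2_eq_square)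
  also have "\<dots> \<le> 4 * (1 / (8 * C0)) * (1 / 8)"
    using wc w8 C0 unfolding C0_def by (intro mult_mono) (auto simp: divide_simps mult.commute)
  finally have s1': "cmod (z * w - 1) \<le> 1 / (16 * C0)" using zw by simp
  define A where "A = complex_of_real c + complex_of_real t * complex_of_real b / z + (complex_of_real t)\<^sup>2 / z\<^sup>2"
  define B where "B = 2 * complex_of_real c + complex_of_real t + complex_of_real t * complex_of_real b / z"
  have e0: "A * (z * G)\<^sup>2 - B * (z * G) + complex_of_real (c + t) = 0"
    using PzG P_s[OF z0, of b c t "z * G"] z0 unfolding A_def B_def by simp
  have e1: "A * (z * w)\<^sup>2 - B * (z * w) + complex_of_real (c + t) = 0"
    using Pzw P_s[OF z0, of b c t "z * w"] z0 unfolding A_def B_def by simp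
  have zb: "cmod z \<ge> 4 * (\<bar>b\<bar> + 1)" using R z K C0_def by (smt (verit) mult_nonneg_nonneg abs_ge_zero)
  note zp = zpow_bounds[OF zb _ t(2)]
  have nA1: "cmod (complex_of_real t * complex_of_real b / z) = t * \<bar>b\<bar> / cmod z"
    using t by (simp add: norm_mult norm_divide)
  have nA2: "cmod ((complex_of_real t)\<^sup>2 / z\<^sup>2) = t\<^sup>2 / (cmod z)\<^sup>2"
    by (simp add: norm_divide norm_power)
  have "cmod A \<le> \<bar>c\<bar> + t * \<bar>b\<bar> / cmod z + t\<^sup>2 / (cmod z)\<^sup>2"
    unfolding A_def using norm_triangle_ineq[of "complex_of_real c + complex_of_real t * complex_of_real b / z" "(complex_of_real t)\<^sup>2 / z\<^sup>2"]
      norm_triangle_ineq[of "complex_of_real c" "complex_of_real t * complex_of_real b / z"] nA1 nA2 by simp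
  also have "\<dots> \<le> \<bar>c\<bar> + t / 4 + t / 8" using zp t by linarith
  also have "\<dots> \<le> C0" unfolding C0_def using t by simp
  finally have nA: "cmod A \<le> C0" .
  have "2 * A - B = - complex_of_real t + complex_of_real t * complex_of_real b / z + 2 * ((complex_of_real t)\<^sup>2 / z\<^sup>2)"
    unfolding A_def B_def by (simp add: algebra_simps)
  then have AB: "2 * A - B = - (complex_of_real t - (complex_of_real t * complex_of_real b / z + 2 * ((complex_of_real t)\<^sup>2 / z\<^sup>2)))"
    by simp
  have nX: "cmod (complex_of_real t * complex_of_real b / z + 2 * ((complex_of_real t)\<^sup>2 / z\<^sup>2)) \<le> t * \<bar>b\<bar> / cmod z + 2 * (t\<^sup>2 / (cmod z)\<^sup>2)"
  proof -
    have nA3: "cmod (2 * ((complex_of_real t)\<^sup>2 / z\<^sup>2)) = 2 * (t\<^sup>2 / (cmod z)\<^sup>2)"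
      by (simp add: norm_mult norm_divide norm_power)
    show ?thesis using norm_triangle_ineq[of "complex_of_real t * complex_of_real b / z" "2 * ((complex_of_real t)\<^sup>2 / z\<^sup>2)"]
      unfolding nA1 nA3 .
  qed
  have "cmod (complex_of_real t) - cmod (complex_of_real t * complex_of_real b / z + 2 * ((complex_of_real t)\<^sup>2 / z\<^sup>2))
     \<le> cmod (complex_of_real t - (complex_of_real t * complex_of_real b / z + 2 * ((complex_of_real t)\<^sup>2 / z\<^sup>2)))"
    by (rule norm_triangle_ineq2)
  then have "cmod (2 * A - B) \<ge> t - t * \<bar>b\<bar> / cmod z - 2 * (t\<^sup>2 / (cmod z)\<^sup>2)"
    unfolding AB norm_minus_cancel using nX t by simp
  then have nB: "cmod (2 * A - B) \<ge> t / 2" using zp t by linarith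
  have "cmod A * (cmod (z * G - 1) + cmod (z * w - 1)) \<le> C0 * (1 / (8 * C0) + 1 / (16 * C0))"
    using nA s0' s1' C0 by (intro mult_mono add_mono) auto
  also have "\<dots> = 3 / 16" using C0 by (simp add: field_simps)
  also have "\<dots> < cmod (2 * A - B)" using nB t by simp
  finally have "z * G = z * w" by (rule quad_sel[OF e0 e1])
  then show ?thesis using z0 unfolding G_def by simp
qed

lemma uniq_sel:
  assumes fm: "is_free_meixner m b c 0 t" and t: "1 \<le> t" "t \<le> 2" "c + t \<ge> 0"
    and cmK: "cm m K" and K: "K \<ge> 1"
    and R: "R \<ge> K + 8 * (\<bar>c\<bar> + 1) * K + 4 * (\<bar>b\<bar> + 1) + 4"
    and z: "cmod z > R" and Gz: "cauchy_tr m z = w"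
    and w0: "w \<noteq> 0" and wb: "cmod w * (8 * (\<bar>b\<bar> + 1)) \<le> 1" and wc: "cmod w * (8 * (\<bar>c\<bar> + 1)) \<le> 1" and w8: "cmod w \<le> 1 / 8"
    and Pzw: "Pf b c t zs w = 0" and zw: "cmod (zs * w - 1) \<le> 4 * (cmod w)\<^sup>2"
  shows "z = zs"
proof -
  interpret cm m K by (rule cmK)
  define C0 where "C0 = \<bar>c\<bar> + 1"
  have C0: "C0 \<ge> 1" unfolding C0_def by simp
  have zK: "cmod z > K" using R z K C0_def by (smt (verit) mult_nonneg_nonneg abs_ge_zero)
  have PzG: "Pf b c t z w = 0" unfolding Gz[symmetric] by (rule P_all[OF fm _ t(3) cmK zK]) (use t in simp)
  define d where "d = cmod z - K"
  have d8: "d \<ge> 8 * C0 * K" using R z unfolding d_def C0_def by simp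
  have dpos: "d > 0" using d8 C0 K by (smt (verit) mult_pos_pos)
  have H: "\<And>t'. \<bar>t'\<bar> \<le> K \<Longrightarrow> d \<le> cmod (z - complex_of_real t')"
  proof -
    fix t' :: real assume "\<bar>t'\<bar> \<le> K"
    moreover have "cmod z - cmod (complex_of_real t') \<le> cmod (z - complex_of_real t')" by (rule norm_triangle_ineq2)
    ultimately show "d \<le> cmod (z - complex_of_real t')" unfolding d_def by simp
  qed
  have s0: "cmod (z * w - 1) \<le> K / d" unfolding Gz[symmetric] by (rule zG1[OF dpos H])
  have pp: "0 < d * (8 * C0 * K)" using d8 K C0 dpos by (intro mult_pos_pos) auto
  have "K / d \<le> K / (8 * C0 * K)" using d8 K C0 pp by (intro divide_left_mono) auto
  also have "\<dots> = 1 / (8 * C0)" using K by simp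
  finally have s0': "cmod (z * w - 1) \<le> 1 / (8 * C0)" using s0 by linarith
  have "4 * (cmod w)\<^sup>2 = 4 * cmod w * cmod w" by (simp add: power2_eq_square)
  also have "\<dots> \<le> 4 * (1 / (8 * C0)) * (1 / 8)"
    using wc w8 C0 unfolding C0_def by (intro mult_mono) (auto simp: divide_simps mult.commute)
  finally have s1': "cmod (zs * w - 1) \<le> 1 / (16 * C0)" using zw by simp
  define B where "B = 2 * complex_of_real c + complex_of_real t - complex_of_real t * complex_of_real b * w"
  define C where "C = complex_of_real (c + t) - complex_of_real t * complex_of_real b * w + (complex_of_real t)\<^sup>2 * w\<^sup>2"
  have e0: "complex_of_real c * (z * w)\<^sup>2 - B * (z * w) + C = 0"
    using PzG P_v[OF w0, of b c t "z * w"] w0 unfolding B_def C_def by simp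
  have e1: "complex_of_real c * (zs * w)\<^sup>2 - B * (zs * w) + C = 0"
    using Pzw P_v[OF w0, of b c t "zs * w"] w0 unfolding B_def C_def by simp
  have bw: "\<bar>b\<bar> * cmod w \<le> 1 / 8" using wb by (simp add: algebra_simps) (smt (verit) norm_ge_zero)
  have "2 * complex_of_real c - B = - complex_of_real t + complex_of_real t * complex_of_real b * w"
    unfolding B_def by simp
  then have "cmod (2 * complex_of_real c - B) \<ge> t - t * (\<bar>b\<bar> * cmod w)"
    using norm_triangle_ineq2[of "- complex_of_real t" "- (complex_of_real t * complex_of_real b * w)"] t
    by (simp add: norm_mult)
  moreover have "t * (\<bar>b\<bar> * cmod w) \<le> t * (1 / 8)" using bw t by (intro mult_left_mono) auto
  ultimately have nB: "cmod (2 * complex_of_real c - B) \<ge> 7 / 8" using t by linarith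
  have "cmod (complex_of_real c) * (cmod (z * w - 1) + cmod (zs * w - 1)) \<le> C0 * (1 / (8 * C0) + 1 / (16 * C0))"
    using s0' s1' unfolding C0_def by (intro mult_mono add_mono) auto
  also have "\<dots> = 3 / 16" using C0 by (simp add: field_simps)
  also have "\<dots> < cmod (2 * complex_of_real c - B)" using nB by simp
  finally have "z * w = zs * w" by (rule quad_sel[OF e0 e1])
  then show ?thesis using w0 by simp
qed




lemma cm_mono:
  assumes "cm m K1" "K1 \<le> K" shows "cm m K"
proof -
  interpret cm m K1 by fact
  have "AE t in m. \<bar>t\<bar> \<le> K" using ae by eventually_elim (use assms(2) in simp)
  then show ?thesis using ps sb unfolding cm_def cm_axioms_def pm_def by blast
qed

lemma inv_for:
  assumes fm: "is_free_meixner m b c 0 t" and t: "1 \<le> t" "t \<le> 2" "c + t \<ge> 0"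
    and cmK: "cm m K" and K: "K \<ge> 1"
    and R: "R = K + 8 * (\<bar>c\<bar> + 1) * K + 4 * (\<bar>b\<bar> + 1) + 4"
    and w0: "w \<noteq> 0" and wb: "cmod w * (8 * (\<bar>b\<bar> + 1)) \<le> 1" and wc: "cmod w * (8 * (\<bar>c\<bar> + 1)) \<le> 1"
    and wR: "cmod w * (R + 2) \<le> 1"
  shows "(\<exists>!z. cmod z > R \<and> cauchy_tr m z = w) \<and> cauchy_inv m R w = 1 / w + complex_of_real t * Sf b c w"
proof -
  define zs where "zs = 1 / w + complex_of_real t * Sf b c w"
  have R0: "R \<ge> 0" using R K by (smt (verit) mult_nonneg_nonneg abs_ge_zero)
  have w8: "cmod w \<le> 1 / 8" using wb by (simp add: algebra_simps) (smt (verit) norm_ge_zero mult_nonneg_nonneg abs_ge_zero)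
  have t0: "0 < t" using t by simp
  note cd = cand[OF w0 wb wc wR R0 t0 t(2)]
  have zsR: "cmod zs > R" unfolding zs_def by (rule cd(1))
  have zsw: "cmod (zs * w - 1) \<le> 4 * (cmod w)\<^sup>2" unfolding zs_def by (rule cd(2))
  have Pzs: "Pf b c t zs w = 0" unfolding zs_def by (rule cd(3))
  have Rge: "R \<ge> K + 8 * (\<bar>c\<bar> + 1) * K + 4 * (\<bar>b\<bar> + 1) + 4" using R by simp
  have Gzs: "cauchy_tr m zs = w"
    by (rule exist_sel[OF fm t cmK K Rge zsR w0 wc w8 Pzs zsw])
  have uq: "\<And>z. cmod z > R \<Longrightarrow> cauchy_tr m z = w \<Longrightarrow> z = zs"
    by (rule uniq_sel[OF fm t cmK K Rge _ _ w0 wb wc w8 Pzs zsw])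
  have P0: "cmod zs > R \<and> cauchy_tr m zs = w" using zsR Gzs by (rule conjI)
  have uq': "\<And>z. cmod z > R \<and> cauchy_tr m z = w \<Longrightarrow> z = zs"
    by (erule conjE) (rule uq)
  have ex: "\<exists>!z. cmod z > R \<and> cauchy_tr m z = w" by (rule ex1I[where P="\<lambda>z. cmod z > R \<and> cauchy_tr m z = w", OF P0 uq'])
  have "cauchy_inv m R w = zs" unfolding cauchy_inv_def by (rule the_equality[where P="\<lambda>z. cmod z > R \<and> cauchy_tr m z = w", OF P0 uq'])
  then show ?thesis using ex unfolding zs_def by simp
qed

lemma part2:
  assumes c: "c \<ge> -1" and fmu: "is_free_meixner \<mu> b c 0 1" and fnu: "is_free_meixner \<nu> b (c + 1) 0 1"
    and mc: "is_monotone_conv \<mu> \<nu> \<rho>"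
  shows "is_free_conv \<mu> \<mu> \<rho>"
proof -
  have fnu': "is_free_meixner \<nu> (b + 0) (c + 1) 0 1" using fnu by simp
  have "is_free_meixner \<rho> b c (0 + 0) (1 + 1)" by (rule part1[OF _ _ _ fmu fnu' mc]) (use c in auto)
  then have frho: "is_free_meixner \<rho> b c 0 2" by simp
  obtain K1 where K1: "K1 \<ge> 1" "cm \<mu> K1" using meix_cm'[OF fmu] by blast
  obtain K2 where K2: "K2 \<ge> 1" "cm \<rho> K2" using meix_cm'[OF frho] by blast
  define K where "K = max K1 K2"
  have K: "K \<ge> 1" using K1 unfolding K_def by simp
  have cmu: "cm \<mu> K" by (rule cm_mono[OF K1(2)]) (simp add: K_def)
  have crho: "cm \<rho> K" by (rule cm_mono[OF K2(2)]) (simp add: K_def)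
  define R where "R = K + 8 * (\<bar>c\<bar> + 1) * K + 4 * (\<bar>b\<bar> + 1) + 4"
  have R0: "R \<ge> 0" using R_def K by (smt (verit) mult_nonneg_nonneg abs_ge_zero)
  define r where "r = min (1 / (8 * (\<bar>b\<bar> + 1))) (min (1 / (8 * (\<bar>c\<bar> + 1))) (1 / (R + 2)))"
  have bp: "0 < 8 * \<bar>b\<bar> + 8" and cp: "0 < 8 * \<bar>c\<bar> + 8" by (smt (verit) abs_ge_zero)+
  note bp cp
  then have rpos: "r > 0" unfolding r_def using R0 by simp
  have rp1: "real_prob \<mu>" using fmu unfolding is_free_meixner_def by blast
  have rp3: "real_prob \<rho>" using frho unfolding is_free_meixner_def by blast
  have main: "(\<forall>m\<in>{\<mu>, \<mu>, \<rho>}. \<exists>!z. cmod z > R \<and> cauchy_tr m z = w) \<and>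
        cauchy_inv \<rho> R w - 1 / w = (cauchy_inv \<mu> R w - 1 / w) + (cauchy_inv \<mu> R w - 1 / w)"
    if w: "0 < cmod w" "cmod w < r" for w
  proof -
    have w0: "w \<noteq> 0" using w by auto
    have "cmod w < 1 / (8 * (\<bar>b\<bar> + 1))" using w unfolding r_def by simp
    then have wb: "cmod w * (8 * (\<bar>b\<bar> + 1)) \<le> 1" using bp by (simp add: divide_simps)
    have "cmod w < 1 / (8 * (\<bar>c\<bar> + 1))" using w unfolding r_def by simp
    then have wc: "cmod w * (8 * (\<bar>c\<bar> + 1)) \<le> 1" using cp by (simp add: divide_simps)
    have "cmod w < 1 / (R + 2)" using w unfolding r_def by simp
    then have wR: "cmod w * (R + 2) \<le> 1" using R0 by (simp add: divide_simps)
    have I1: "(\<exists>!z. cmod z > R \<and> cauchy_tr \<mu> z = w) \<and> cauchy_inv \<mu> R w = 1 / w + complex_of_real 1 * Sf b c w"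
      by (rule inv_for[OF fmu _ _ _ cmu K R_def w0 wb wc wR]) (use c in auto)
    have I2: "(\<exists>!z. cmod z > R \<and> cauchy_tr \<rho> z = w) \<and> cauchy_inv \<rho> R w = 1 / w + complex_of_real 2 * Sf b c w"
      by (rule inv_for[OF frho _ _ _ crho K R_def w0 wb wc wR]) (use c in auto)
    have e1: "cauchy_inv \<mu> R w = 1 / w + Sf b c w" using I1 by simp
    have e2: "cauchy_inv \<rho> R w = 1 / w + 2 * Sf b c w" using I2 by simp
    have "cauchy_inv \<rho> R w - 1 / w = (cauchy_inv \<mu> R w - 1 / w) + (cauchy_inv \<mu> R w - 1 / w)"
      unfolding e1 e2 by simp
    moreover have "\<forall>m\<in>{\<mu>, \<mu>, \<rho>}. \<exists>!z. cmod z > R \<and> cauchy_tr m z = w"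
    proof
      fix m assume "m \<in> {\<mu>, \<mu>, \<rho>}"
      then have "m = \<mu> \<or> m = \<rho>" by simp
      then show "\<exists>!z. cmod z > R \<and> cauchy_tr m z = w" using I1 I2 by (elim disjE) simp_all
    qed
    ultimately show ?thesis by simp
  qed
  have "\<exists>R r. r > 0 \<and> (\<forall>w. 0 < cmod w \<and> cmod w < r \<longrightarrow>
        (\<forall>m\<in>{\<mu>, \<mu>, \<rho>}. \<exists>!z. cmod z > R \<and> cauchy_tr m z = w) \<and>
        cauchy_inv \<rho> R w - 1 / w = (cauchy_inv \<mu> R w - 1 / w) + (cauchy_inv \<mu> R w - 1 / w))"
  proof (rule exI[where x=R], rule exI[where x=r], intro conjI rpos allI impI)
    fix w :: complex assume a: "0 < cmod w \<and> cmod w < r"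
    show "(\<forall>m\<in>{\<mu>, \<mu>, \<rho>}. \<exists>!z. cmod z > R \<and> cauchy_tr m z = w)"
      using main[OF conjunct1[OF a] conjunct2[OF a]] by (rule conjunct1)
    show "cauchy_inv \<rho> R w - 1 / w = (cauchy_inv \<mu> R w - 1 / w) + (cauchy_inv \<mu> R w - 1 / w)"
      using main[OF conjunct1[OF a] conjunct2[OF a]] by (rule conjunct2)
  qed
  then show ?thesis unfolding is_free_conv_def using rp1 rp3 by (intro conjI)
qed

theorem mainTheorem11:
  fixes b c \<beta> \<beta>' \<gamma> \<gamma>' :: real
  shows "(\<gamma> > 0 \<and> \<gamma>' \<ge> 0 \<and> c \<ge> - \<gamma> \<longrightarrow>
          (\<forall>\<mu> \<nu> \<rho>. is_free_meixner \<mu> b c \<beta> \<gamma> \<and> is_free_meixner \<nu> (b + \<beta>) (c + \<gamma>) \<beta>' \<gamma>'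
              \<and> is_monotone_conv \<mu> \<nu> \<rho> \<longrightarrow> is_free_meixner \<rho> b c (\<beta> + \<beta>') (\<gamma> + \<gamma>')))
       \<and> (c \<ge> -1 \<longrightarrow>
          (\<forall>\<mu> \<nu> \<rho>. is_free_meixner \<mu> b c 0 1 \<and> is_free_meixner \<nu> b (c + 1) 0 1
              \<and> is_monotone_conv \<mu> \<nu> \<rho> \<longrightarrow> is_free_conv \<mu> \<mu> \<rho>))"
proof (intro conjI impI allI)
  fix \<mu> \<nu> \<rho> :: "real measure"
  assume "\<gamma> > 0 \<and> \<gamma>' \<ge> 0 \<and> c \<ge> - \<gamma>"
    and "is_free_meixner \<mu> b c \<beta> \<gamma> \<and> is_free_meixner \<nu> (b + \<beta>) (c + \<gamma>) \<beta>' \<gamma>' \<and> is_monotone_conv \<mu> \<nu> \<rho>"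
  then show "is_free_meixner \<rho> b c (\<beta> + \<beta>') (\<gamma> + \<gamma>')" using part1 by blast
next
  fix \<mu> \<nu> \<rho> :: "real measure"
  assume "c \<ge> -1"
    and "is_free_meixner \<mu> b c 0 1 \<and> is_free_meixner \<nu> b (c + 1) 0 1 \<and> is_monotone_conv \<mu> \<nu> \<rho>"
  then show "is_free_conv \<mu> \<mu> \<rho>" using part2 by blast
qed


end
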